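(* Let $M$ be a symmetric homogeneous stable mean having a symmetric asymptotic expansion with coefficients $(a_n)$. Then, as $x\to\infty$, $$M(x-t,x+t)=x+a_1t^2x^{-1}+\tfrac16a_1(1+a_1)(1-4a_1)t^4x^{-3}+\tfrac1{90}a_1(1+a_1)(6-31a_1+36a_1^2+64a_1^3)t^6x^{-5}$$ $$+\tfrac1{2520}a_1(1+a_1)\big(90-531a_1+937a_1^2+568a_1^3-3088a_1^4-2176a_1^5\big)t^8x^{-7}+O(x^{-9}).$$
   Context: A bi-variate mean is $M:(0,\infty)^2\to(0,\infty)$ with $\min(s,t)\le M(s,t)\le\max(s,t)$; symmetric: $M(s,t)=M(t,s)$; homogeneous: $M(\lambda s,\lambda t)=\lambda M(s,t)$. $M$ is stable if $M(s,t)=M\big(M(s,M(s,t)),M(M(s,t),t)\big)$ for all $s,t>0$. $M$ has a symmetric asymptotic expansion with coefficients $(a_n)$ if for every fixed real $t$ and every $N\ge0$, $M(x-t,x+t)=\sum_{n=0}^Na_nt^{2n}x^{-2n+1}+o(x^{-2N+1})$ as $x\to\infty$. *)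

theory Defs
  imports "HOL-Analysis.Analysis" "HOL-Library.Landau_Symbols"
begin

text \<open>A bivariate mean on (0,inf)^2; values outside the domain are irrelevant.\<close>
definition is_mean :: "(real \<Rightarrow> real \<Rightarrow> real) \<Rightarrow> bool" where
  "is_mean M \<longleftrightarrow> (\<forall>s t. s > 0 \<longrightarrow> t > 0 \<longrightarrow> min s t \<le> M s t \<and> M s t \<le> max s t)"

definition symmetric_mean :: "(real \<Rightarrow> real \<Rightarrow> real) \<Rightarrow> bool" where
  "symmetric_mean M \<longleftrightarrow> (\<forall>s t. s > 0 \<longrightarrow> t > 0 \<longrightarrow> M s t = M t s)"

definition homogeneous_mean :: "(real \<Rightarrow> real \<Rightarrow> real) \<Rightarrow> bool" where
  "homogeneous_mean M \<longleftrightarrow>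
     (\<forall>l s t. l > 0 \<longrightarrow> s > 0 \<longrightarrow> t > 0 \<longrightarrow> M (l * s) (l * t) = l * M s t)"

definition stable_mean :: "(real \<Rightarrow> real \<Rightarrow> real) \<Rightarrow> bool" where
  "stable_mean M \<longleftrightarrow>
     (\<forall>s t. s > 0 \<longrightarrow> t > 0 \<longrightarrow> M s t = M (M s (M s t)) (M (M s t) t))"

definition has_sym_asymp_expansion :: "(real \<Rightarrow> real \<Rightarrow> real) \<Rightarrow> (nat \<Rightarrow> real) \<Rightarrow> bool" where
  "has_sym_asymp_expansion M a \<longleftrightarrow>
     (\<forall>(t::real) (N::nat).
        (\<lambda>x. M (x - t) (x + t) - (\<Sum>n\<le>N. a n * t ^ (2 * n) * x powi (1 - 2 * int n)))
          \<in> o[at_top](\<lambda>x. x powi (1 - 2 * int N)))"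

end

theory Submission
  imports Defs "HOL-Computational_Algebra.Polynomial"
begin


definition small :: "(real \<Rightarrow> real) \<Rightarrow> bool" where
  "small f \<longleftrightarrow> (\<exists>C \<delta>. \<delta> > 0 \<and> (\<forall>u. \<bar>u\<bar> < \<delta> \<longrightarrow> \<bar>f u\<bar> \<le> C * \<bar>u\<bar> ^ 10))"

definition bnd :: "(real \<Rightarrow> real) \<Rightarrow> bool" where
  "bnd f \<longleftrightarrow> (\<exists>C \<delta>. \<delta> > 0 \<and> (\<forall>u. \<bar>u\<bar> < \<delta> \<longrightarrow> \<bar>f u\<bar> \<le> C))"

definition approx :: "(real \<Rightarrow> real) \<Rightarrow> (real \<Rightarrow> real) \<Rightarrow> bool" where
  "approx f g \<longleftrightarrow> small (\<lambda>u. f u - g u)"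

lemma smallE:
  assumes "small f"
  obtains C \<delta> where "\<delta> > 0" "C \<ge> 0" "\<And>u. \<bar>u\<bar> < \<delta> \<Longrightarrow> \<bar>f u\<bar> \<le> C * \<bar>u\<bar> ^ 10"
proof -
  from assms obtain C \<delta> where d: "\<delta> > 0" and h: "\<forall>u. \<bar>u\<bar> < \<delta> \<longrightarrow> \<bar>f u\<bar> \<le> C * \<bar>u\<bar> ^ 10"
    unfolding small_def by blast
  have "\<bar>f u\<bar> \<le> max C 0 * \<bar>u\<bar> ^ 10" if "\<bar>u\<bar> < \<delta>" for u
  proof -
    have "C * \<bar>u\<bar> ^ 10 \<le> max C 0 * \<bar>u\<bar> ^ 10" by (intro mult_right_mono) auto
    with h that show ?thesis by force
  qed
  then show ?thesis using that[of \<delta> "max C 0"] d by auto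
qed

lemma bndE:
  assumes "bnd f"
  obtains C \<delta> where "\<delta> > 0" "C \<ge> 0" "\<And>u. \<bar>u\<bar> < \<delta> \<Longrightarrow> \<bar>f u\<bar> \<le> C"
proof -
  from assms obtain C \<delta> where d: "\<delta> > 0" and h: "\<forall>u. \<bar>u\<bar> < \<delta> \<longrightarrow> \<bar>f u\<bar> \<le> C"
    unfolding bnd_def by blast
  show ?thesis using that[of \<delta> "max C 0"] d h by force
qed

lemma small_add:
  assumes "small f" "small g" shows "small (\<lambda>u. f u + g u)"
proof -
  obtain C1 d1 where 1: "d1 > 0" "C1 \<ge> 0" "\<And>u. \<bar>u\<bar> < d1 \<Longrightarrow> \<bar>f u\<bar> \<le> C1 * \<bar>u\<bar> ^ 10"
    using assms(1) by (elim smallE) blast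
  obtain C2 d2 where 2: "d2 > 0" "C2 \<ge> 0" "\<And>u. \<bar>u\<bar> < d2 \<Longrightarrow> \<bar>g u\<bar> \<le> C2 * \<bar>u\<bar> ^ 10"
    using assms(2) by (elim smallE) blast
  have "\<bar>f u + g u\<bar> \<le> (C1 + C2) * \<bar>u\<bar> ^ 10" if "\<bar>u\<bar> < min d1 d2" for u
  proof -
    have "\<bar>f u + g u\<bar> \<le> \<bar>f u\<bar> + \<bar>g u\<bar>" by simp
    also have "\<dots> \<le> C1 * \<bar>u\<bar> ^ 10 + C2 * \<bar>u\<bar> ^ 10" using 1(3) 2(3) that by (intro add_mono) auto
    finally show ?thesis by (simp add: algebra_simps)
  qed
  then show ?thesis unfolding small_def using 1(1) 2(1)
    by (intro exI[of _ "C1+C2"] exI[of _ "min d1 d2"]) auto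
qed

lemma small_mult:
  assumes "small f" "bnd g" shows "small (\<lambda>u. f u * g u)"
proof -
  obtain C1 d1 where 1: "d1 > 0" "C1 \<ge> 0" "\<And>u. \<bar>u\<bar> < d1 \<Longrightarrow> \<bar>f u\<bar> \<le> C1 * \<bar>u\<bar> ^ 10"
    using assms(1) by (elim smallE) blast
  obtain C2 d2 where 2: "d2 > 0" "C2 \<ge> 0" "\<And>u. \<bar>u\<bar> < d2 \<Longrightarrow> \<bar>g u\<bar> \<le> C2"
    using assms(2) by (elim bndE) blast
  have "\<bar>f u * g u\<bar> \<le> (C1 * C2) * \<bar>u\<bar> ^ 10" if "\<bar>u\<bar> < min d1 d2" for u
  proof -
    have "\<bar>f u * g u\<bar> = \<bar>f u\<bar> * \<bar>g u\<bar>" by (simp add: abs_mult)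
    also have "\<dots> \<le> (C1 * \<bar>u\<bar> ^ 10) * C2" using 1 2 that
      by (intro mult_mono) auto
    finally show ?thesis by (simp add: algebra_simps)
  qed
  then show ?thesis unfolding small_def using 1(1) 2(1)
    by (intro exI[of _ "C1*C2"] exI[of _ "min d1 d2"]) auto
qed

lemma bnd_add:
  assumes "bnd f" "bnd g" shows "bnd (\<lambda>u. f u + g u)"
proof -
  obtain C1 d1 where 1: "d1 > 0" "C1 \<ge> 0" "\<And>u. \<bar>u\<bar> < d1 \<Longrightarrow> \<bar>f u\<bar> \<le> C1"
    using assms(1) by (elim bndE) blast
  obtain C2 d2 where 2: "d2 > 0" "C2 \<ge> 0" "\<And>u. \<bar>u\<bar> < d2 \<Longrightarrow> \<bar>g u\<bar> \<le> C2"
    using assms(2) by (elim bndE) blast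
  have "\<bar>f u + g u\<bar> \<le> C1 + C2" if "\<bar>u\<bar> < min d1 d2" for u
    using 1(3)[of u] 2(3)[of u] that by auto
  then show ?thesis unfolding bnd_def using 1(1) 2(1)
    by (intro exI[of _ "C1+C2"] exI[of _ "min d1 d2"]) auto
qed

lemma small_bnd: assumes "small f" shows "bnd f"
proof -
  obtain C1 d1 where 1: "d1 > 0" "C1 \<ge> 0" "\<And>u. \<bar>u\<bar> < d1 \<Longrightarrow> \<bar>f u\<bar> \<le> C1 * \<bar>u\<bar> ^ 10"
    using assms(1) by (elim smallE) blast
  have "\<bar>f u\<bar> \<le> C1" if "\<bar>u\<bar> < min d1 1" for u
  proof -
    have "\<bar>u\<bar> ^ 10 \<le> 1" using that by (intro power_le_one) auto
    then have "C1 * \<bar>u\<bar> ^ 10 \<le> C1" using 1(2) by (simp add: mult_left_le)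
    with 1(3)[of u] that show ?thesis by auto
  qed
  then show ?thesis unfolding bnd_def using 1(1)
    by (intro exI[of _ C1] exI[of _ "min d1 1"]) auto
qed

lemma small_cong:
  assumes "small f" "\<And>u. \<bar>u\<bar> < 1 \<Longrightarrow> g u = f u" shows "small g"
proof -
  obtain C1 d1 where 1: "d1 > 0" "C1 \<ge> 0" "\<And>u. \<bar>u\<bar> < d1 \<Longrightarrow> \<bar>f u\<bar> \<le> C1 * \<bar>u\<bar> ^ 10"
    using assms(1) by (elim smallE) blast
  show ?thesis unfolding small_def using 1 assms(2)
    by (intro exI[of _ C1] exI[of _ "min d1 1"]) auto
qed

lemma small_zero: "small (\<lambda>u. 0)"
  unfolding small_def by (intro exI[of _ 0] exI[of _ 1]) auto

lemma small_poly: assumes "bnd s" shows "small (\<lambda>u. u ^ 10 * s u)"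
proof -
  have "small (\<lambda>u. u ^ 10)" unfolding small_def
    by (intro exI[of _ 1] exI[of _ 1]) (auto simp: power_abs)
  then show ?thesis using small_mult[OF _ assms] by simp
qed

lemma bnd_cont: assumes "isCont f 0" shows "bnd f"
proof -
  from assms have "\<forall>e>0. \<exists>d>0. \<forall>x. dist x 0 < d \<longrightarrow> dist (f x) (f 0) < e"
    by (simp add: continuous_at_eps_delta)
  then obtain d where d: "d > 0" "\<And>x. dist x 0 < d \<Longrightarrow> dist (f x) (f 0) < 1"
    by (meson zero_less_one)
  have "\<bar>f u\<bar> \<le> \<bar>f 0\<bar> + 1" if "\<bar>u\<bar> < d" for u
    using d(2)[of u] that by (auto simp: dist_real_def)
  then show ?thesis unfolding bnd_def using d(1) by blast
qed

lemma bnd_mult: assumes "bnd f" "bnd g" shows "bnd (\<lambda>u. f u * g u)"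
proof -
  obtain C1 d1 where 1: "d1 > 0" "C1 \<ge> 0" "\<And>u. \<bar>u\<bar> < d1 \<Longrightarrow> \<bar>f u\<bar> \<le> C1"
    using assms(1) by (elim bndE) blast
  obtain C2 d2 where 2: "d2 > 0" "C2 \<ge> 0" "\<And>u. \<bar>u\<bar> < d2 \<Longrightarrow> \<bar>g u\<bar> \<le> C2"
    using assms(2) by (elim bndE) blast
  have "\<bar>f u * g u\<bar> \<le> C1 * C2" if "\<bar>u\<bar> < min d1 d2" for u
    using 1(3)[of u] 2(3)[of u] that by (auto simp: abs_mult intro!: mult_mono)
  then show ?thesis unfolding bnd_def using 1(1) 2(1)
    by (intro exI[of _ "C1*C2"] exI[of _ "min d1 d2"]) auto
qed

lemma small_cmult: "small f \<Longrightarrow> small (\<lambda>u. c * f u)"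
  using small_mult[of f "\<lambda>_. c"] bnd_cont[of "\<lambda>_. c"] by (simp add: mult.commute)

lemma small_neg: "small f \<Longrightarrow> small (\<lambda>u. f (-u))"
  unfolding small_def by (metis abs_minus_cancel)

lemma small_isCont0:
  assumes "small f" shows "f \<midarrow>0\<rightarrow> 0" "f 0 = 0"
proof -
  obtain C1 d1 where 1: "d1 > 0" "C1 \<ge> 0" "\<And>u. \<bar>u\<bar> < d1 \<Longrightarrow> \<bar>f u\<bar> \<le> C1 * \<bar>u\<bar> ^ 10"
    using assms(1) by (elim smallE) blast
  show "f 0 = 0" using 1(3)[of 0] 1(1) by simp
  have ev: "eventually (\<lambda>u. norm (f u) \<le> C1 * \<bar>u\<bar> ^ 10) (at 0)"
    unfolding eventually_at using 1 by (intro exI[of _ d1]) (auto simp: dist_real_def)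
  have "(\<lambda>u::real. C1 * \<bar>u\<bar> ^ 10) \<midarrow>0\<rightarrow> C1 * \<bar>0\<bar>^10"
    by (intro tendsto_intros)
  then have "(\<lambda>u::real. C1 * \<bar>u\<bar> ^ 10) \<midarrow>0\<rightarrow> 0" by simp
  from Lim_null_comparison[OF ev this] show "f \<midarrow>0\<rightarrow> 0" .
qed

lemma approx_trans: "approx f g \<Longrightarrow> approx g h \<Longrightarrow> approx f h"
  unfolding approx_def using small_add[of "\<lambda>u. f u - g u" "\<lambda>u. g u - h u"] by simp

lemma approx_sym: "approx f g \<Longrightarrow> approx g f"
  unfolding approx_def using small_cmult[of "\<lambda>u. f u - g u" "-1"] by simp

lemma approx_add: "approx f g \<Longrightarrow> approx f' g' \<Longrightarrow> approx (\<lambda>u. f u + f' u) (\<lambda>u. g u + g' u)"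
  unfolding approx_def using small_add[of "\<lambda>u. f u - g u" "\<lambda>u. f' u - g' u"]
  by (simp add: algebra_simps)

lemma approx_cmult: "approx f g \<Longrightarrow> approx (\<lambda>u. c * f u) (\<lambda>u. c * g u)"
  unfolding approx_def using small_cmult[of "\<lambda>u. f u - g u" c]
  by (simp add: algebra_simps)

lemma approx_mult:
  assumes "approx f g" "approx f' g'" "bnd f" "bnd g'"
  shows "approx (\<lambda>u. f u * f' u) (\<lambda>u. g u * g' u)"
proof -
  have "small (\<lambda>u. (f' u - g' u) * f u + (f u - g u) * g' u)"
    using assms unfolding approx_def by (intro small_add small_mult)
  then show ?thesis unfolding approx_def by (simp add: algebra_simps)
qed

lemma approx_refl: "approx f f"
  unfolding approx_def using small_zero by simp

lemma approx_cong: "(\<And>u. \<bar>u\<bar> < 1 \<Longrightarrow> f u = g u) \<Longrightarrow> approx f g"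
  unfolding approx_def using small_cong[OF small_zero] by simp

lemma approx_polyid:
  assumes "\<And>u. f u = g u + u ^ 10 * s u" "isCont s 0" shows "approx f g"
  unfolding approx_def using small_poly[OF bnd_cont[OF assms(2)]] assms(1) by simp

lemma approx_bnd: "approx f g \<Longrightarrow> bnd g \<Longrightarrow> bnd f"
  unfolding approx_def using small_bnd bnd_add[of "\<lambda>u. f u - g u" g] by simp

lemma approx_isCont: assumes "approx f g" "isCont g 0" shows "isCont f 0"
proof -
  have s: "(\<lambda>u. f u - g u) \<midarrow>0\<rightarrow> 0" "f 0 - g 0 = 0"
    using small_isCont0[of "\<lambda>u. f u - g u"] assms(1) unfolding approx_def by auto
  have "(\<lambda>u. (f u - g u) + g u) \<midarrow>0\<rightarrow> 0 + g 0"
    using s(1) assms(2) unfolding isCont_def by (intro tendsto_add)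
  then show ?thesis unfolding isCont_def using s(2) by simp
qed

lemma approx_neg: "approx f g \<Longrightarrow> approx (\<lambda>u. f (-u)) (\<lambda>u. g (-u))"
  unfolding approx_def using small_neg by blast

definition lin :: "(real \<Rightarrow> real) \<Rightarrow> bool" where
  "lin v \<longleftrightarrow> (\<exists>K \<delta>. \<delta> > 0 \<and> K \<ge> 0 \<and> (\<forall>u. \<bar>u\<bar> < \<delta> \<longrightarrow> \<bar>v u\<bar> \<le> K * \<bar>u\<bar>))"

lemma lin_approx:
  assumes "approx v pv" "\<And>u. pv u = u * q u" "isCont q 0" shows "lin v"
proof -
  obtain C1 d1 where 1: "d1 > 0" "C1 \<ge> 0" "\<And>u. \<bar>u\<bar> < d1 \<Longrightarrow> \<bar>v u - pv u\<bar> \<le> C1 * \<bar>u\<bar> ^ 10"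
    using assms(1) unfolding approx_def by (elim smallE) blast
  obtain C2 d2 where 2: "d2 > 0" "C2 \<ge> 0" "\<And>u. \<bar>u\<bar> < d2 \<Longrightarrow> \<bar>q u\<bar> \<le> C2"
    using bnd_cont[OF assms(3)] by (elim bndE) blast
  have "\<bar>v u\<bar> \<le> (C1 + C2) * \<bar>u\<bar>" if u: "\<bar>u\<bar> < min 1 (min d1 d2)" for u
  proof -
    have "\<bar>u\<bar> ^ 10 \<le> \<bar>u\<bar> ^ 1" using u by (intro power_decreasing) auto
    then have "C1 * \<bar>u\<bar> ^ 10 \<le> C1 * \<bar>u\<bar>" using 1(2) by (simp add: mult_left_mono)
    moreover have "\<bar>pv u\<bar> \<le> C2 * \<bar>u\<bar>" using assms(2)[of u] 2(3)[of u] u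
      using mult_left_mono[of "\<bar>q u\<bar>" C2 "\<bar>u\<bar>"] by (simp add: abs_mult mult.commute)
    moreover have "\<bar>v u\<bar> \<le> \<bar>v u - pv u\<bar> + \<bar>pv u\<bar>" by simp
    ultimately show ?thesis using 1(3)[of u] u by (simp add: algebra_simps)
  qed
  then show ?thesis unfolding lin_def using 1 2
    by (intro exI[of _ "C1+C2"] exI[of _ "min 1 (min d1 d2)"]) auto
qed

lemma approx_comp:
  assumes "approx F P" "lin v" shows "approx (\<lambda>u. F (v u)) (\<lambda>u. P (v u))"
proof -
  obtain C1 d1 where 1: "d1 > 0" "C1 \<ge> 0" "\<And>u. \<bar>u\<bar> < d1 \<Longrightarrow> \<bar>F u - P u\<bar> \<le> C1 * \<bar>u\<bar> ^ 10"
    using assms(1) unfolding approx_def by (elim smallE) blast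
  obtain K d2 where 2: "d2 > 0" "K \<ge> 0" "\<And>u. \<bar>u\<bar> < d2 \<Longrightarrow> \<bar>v u\<bar> \<le> K * \<bar>u\<bar>"
    using assms(2) unfolding lin_def by blast
  define d where "d = min d2 (d1 / (K + 1))"
  have dpos: "d > 0" using 1 2 by (simp add: d_def)
  have "\<bar>F (v u) - P (v u)\<bar> \<le> (C1 * K ^ 10) * \<bar>u\<bar> ^ 10" if u: "\<bar>u\<bar> < d" for u
  proof -
    have vu: "\<bar>v u\<bar> \<le> K * \<bar>u\<bar>" using 2(3)[of u] u by (simp add: d_def)
    have "K * \<bar>u\<bar> \<le> (K+1) * \<bar>u\<bar>" by (simp add: mult_right_mono)
    also have "\<dots> < (K+1) * (d1 / (K+1))" using u 2(2) by (intro mult_strict_left_mono) (auto simp: d_def)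
    also have "\<dots> = d1" using 2(2) by simp
    finally have "\<bar>v u\<bar> < d1" using vu by linarith
    then have "\<bar>F (v u) - P (v u)\<bar> \<le> C1 * \<bar>v u\<bar> ^ 10" by (rule 1(3))
    also have "\<dots> \<le> C1 * (K * \<bar>u\<bar>) ^ 10" using vu 1(2)
      by (intro mult_left_mono power_mono) auto
    finally show ?thesis by (simp add: power_mult_distrib)
  qed
  then show ?thesis unfolding approx_def small_def using dpos by blast
qed

definition bndinv :: "(real \<Rightarrow> real) \<Rightarrow> bool" where
  "bndinv d \<longleftrightarrow> (\<exists>c \<delta>. c > 0 \<and> \<delta> > 0 \<and> (\<forall>u. \<bar>u\<bar> < \<delta> \<longrightarrow> \<bar>d u\<bar> \<ge> c))"

lemma bndinv_cont: assumes "isCont f 0" "f 0 \<noteq> 0" shows "bndinv f"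
proof -
  from assms have "\<forall>e>0. \<exists>d>0. \<forall>x. dist x 0 < d \<longrightarrow> dist (f x) (f 0) < e"
    by (simp add: continuous_at_eps_delta)
  then obtain d where d: "d > 0" "\<And>x. dist x 0 < d \<Longrightarrow> dist (f x) (f 0) < \<bar>f 0\<bar>/2"
    using assms(2) by (meson half_gt_zero zero_less_abs_iff)
  have "\<bar>f u\<bar> \<ge> \<bar>f 0\<bar>/2" if "\<bar>u\<bar> < d" for u
    using d(2)[of u] that abs_triangle_ineq2[of "f 0" "f u"] by (auto simp: dist_real_def abs_minus_commute)
  then show ?thesis unfolding bndinv_def using d(1) assms(2) by (intro exI[of _ "\<bar>f 0\<bar>/2"] exI[of _ d]) auto
qed

lemma small_cong2:
  assumes "small f" "e > 0" "\<And>u. \<bar>u\<bar> < e \<Longrightarrow> g u = f u" shows "small g"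
proof -
  obtain C1 d1 where 1: "d1 > 0" "C1 \<ge> 0" "\<And>u. \<bar>u\<bar> < d1 \<Longrightarrow> \<bar>f u\<bar> \<le> C1 * \<bar>u\<bar> ^ 10"
    using assms(1) by (elim smallE) blast
  show ?thesis unfolding small_def using 1 assms(2,3)
    by (intro exI[of _ C1] exI[of _ "min d1 e"]) auto
qed

lemma approx_diff: "approx f g \<Longrightarrow> approx f' g' \<Longrightarrow> approx (\<lambda>u. f u - f' u) (\<lambda>u. g u - g' u)"
  using approx_add[of f g "\<lambda>u. - f' u" "\<lambda>u. - g' u"] approx_cmult[of f' g' "-1"] by simp

lemma bndinv_bnd: assumes "bndinv d" shows "bnd (\<lambda>u. 1 / d u)"
proof -
  obtain c \<delta> where c: "c > 0" "\<delta> > 0" "\<And>u. \<bar>u\<bar> < \<delta> \<Longrightarrow> \<bar>d u\<bar> \<ge> c"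
    using assms unfolding bndinv_def by blast
  have "\<bar>1 / d u\<bar> \<le> 1 / c" if "\<bar>u\<bar> < \<delta>" for u
    using c(1) c(3)[OF that] by (simp add: frac_le)
  then show ?thesis unfolding bnd_def using c(2) by blast
qed

lemma approx_div:
  assumes "approx n pn" "approx d pd" "isCont q 0" "isCont pd 0"
    "\<And>u. pn u = q u * pd u + u ^ 10 * s u" "isCont s 0" "bndinv d"
  shows "approx (\<lambda>u. n u / d u) q"
proof -
  have "approx (\<lambda>u. q u * d u) (\<lambda>u. q u * pd u)"
    using assms by (intro approx_mult approx_refl bnd_cont) auto
  from approx_diff[OF assms(1) this] have "approx (\<lambda>u. n u - q u * d u) (\<lambda>u. pn u - q u * pd u)" .
  moreover have "approx (\<lambda>u. pn u - q u * pd u) (\<lambda>u. 0)"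
    using assms(5,6) by (intro approx_polyid[of _ _ s]) auto
  ultimately have sm: "small (\<lambda>u. n u - q u * d u)"
    unfolding approx_def using approx_trans[unfolded approx_def] by fastforce
  obtain c \<delta> where c: "c > 0" "\<delta> > 0" "\<And>u. \<bar>u\<bar> < \<delta> \<Longrightarrow> \<bar>d u\<bar> \<ge> c"
    using assms(7) unfolding bndinv_def by blast
  have "small (\<lambda>u. (n u - q u * d u) * (1 / d u))"
    by (intro small_mult sm bndinv_bnd assms)
  then show ?thesis unfolding approx_def
  proof (rule small_cong2[OF _ c(2)])
    fix u assume "\<bar>u\<bar> < \<delta>"
    then have "d u \<noteq> 0" using c(1) c(3)[of u] by auto
    then show "n u / d u - q u = (n u - q u * d u) * (1 / d u)" by (simp add: field_simps)
  qed
qed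

lemma approx_polyid2:
  assumes "\<And>u. f u = g u + u ^ 10 * s u" "isCont s 0" "approx h f" shows "approx h g"
  using approx_trans[OF assms(3) approx_polyid[OF assms(1,2)]] .

lemma approx_Fcomp:
  assumes F: "approx F (\<lambda>u. 1 + a1*u^2 + a2*u^4 + a3*u^6 + a4*u^8)"
  and v: "approx v pv" "\<And>u. pv u = u * pq u" "isCont pq 0" "isCont pv 0"
  and c: "isCont q2 0" "isCont q4 0" "isCont q6 0" "isCont q8 0"
         "isCont r2 0" "isCont r4 0" "isCont r6 0" "isCont r8 0"
  and ids: "\<And>u. pv u * pv u = q2 u + u^10 * r2 u"
     "\<And>u. q2 u * q2 u = q4 u + u^10 * r4 u"
     "\<And>u. q4 u * q2 u = q6 u + u^10 * r6 u"
     "\<And>u. q4 u * q4 u = q8 u + u^10 * r8 u"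
  shows "approx (\<lambda>u. F (v u)) (\<lambda>u. 1 + a1 * q2 u + a2 * q4 u + a3 * q6 u + a4 * q8 u)"
proof -
  have l: "lin v" by (rule lin_approx[OF v(1,2,3)])
  have 1: "approx (\<lambda>u. F (v u)) (\<lambda>u. 1 + a1*(v u)^2 + a2*(v u)^4 + a3*(v u)^6 + a4*(v u)^8)"
    using approx_comp[OF F l] by simp
  have bv: "bnd v" by (rule approx_bnd[OF v(1) bnd_cont[OF v(4)]])
  have X: "approx (\<lambda>u. v u * v u) q2"
    by (rule approx_polyid2[OF ids(1) c(5)]) (intro approx_mult v(1) bv bnd_cont v(4))
  have bX: "bnd (\<lambda>u. v u * v u)" by (rule approx_bnd[OF X bnd_cont[OF c(1)]])
  have X2: "approx (\<lambda>u. (v u * v u) * (v u * v u)) q4"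
    by (rule approx_polyid2[OF ids(2) c(6)]) (intro approx_mult X bX bnd_cont c)
  have bX2: "bnd (\<lambda>u. (v u * v u) * (v u * v u))" by (rule approx_bnd[OF X2 bnd_cont[OF c(2)]])
  have X3: "approx (\<lambda>u. ((v u * v u) * (v u * v u)) * (v u * v u)) q6"
    by (rule approx_polyid2[OF ids(3) c(7)]) (intro approx_mult X X2 bX2 bnd_cont c)
  have X4: "approx (\<lambda>u. ((v u * v u) * (v u * v u)) * ((v u * v u) * (v u * v u))) q8"
    by (rule approx_polyid2[OF ids(4) c(8)]) (intro approx_mult X2 bX2 bnd_cont c)
  have 2: "approx (\<lambda>u. 1 + a1 * (v u * v u) + a2 * ((v u * v u) * (v u * v u))
     + a3 * (((v u * v u) * (v u * v u)) * (v u * v u))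
     + a4 * (((v u * v u) * (v u * v u)) * ((v u * v u) * (v u * v u))))
     (\<lambda>u. 1 + a1 * q2 u + a2 * q4 u + a3 * q6 u + a4 * q8 u)"
    by (intro approx_add approx_cmult approx_refl X X2 X3 X4)
  show ?thesis
    apply (rule approx_trans[OF 1])
    apply (rule approx_trans[OF _ 2])
    apply (rule approx_cong)
    apply (simp add: power2_eq_square power4_eq_xxxx)
    apply (simp add: eval_nat_numeral algebra_simps)
    done
qed


definition ser :: "(nat \<Rightarrow> real) \<Rightarrow> real \<Rightarrow> real" where
  "ser c u = (\<Sum>i<10. c i * u ^ i)"
definition cmul :: "(nat \<Rightarrow> real) \<Rightarrow> (nat \<Rightarrow> real) \<Rightarrow> nat \<Rightarrow> real" where
  "cmul c d k = (\<Sum>i\<le>k. c i * d (k - i))"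
definition pol :: "(nat \<Rightarrow> real) \<Rightarrow> real poly" where
  "pol c = (\<Sum>i<10. monom (c i) i)"

lemma poly_pol: "poly (pol c) u = ser c u"
  by (simp add: pol_def ser_def poly_sum poly_monom)

lemma coeff_pol: "coeff (pol c) k = (if k < 10 then c k else 0)"
  by (simp add: pol_def coeff_sum coeff_monom)

lemma small_highpoly: assumes "\<forall>i<10. coeff H i = 0" shows "small (poly H)"
proof -
  define C where "C = (\<Sum>i\<le>degree H. \<bar>coeff H i\<bar>)"
  have "\<bar>poly H u\<bar> \<le> C * \<bar>u\<bar> ^ 10" if u: "\<bar>u\<bar> < 1" for u
  proof -
    have "\<bar>poly H u\<bar> = \<bar>\<Sum>i\<le>degree H. coeff H i * u ^ i\<bar>" by (simp add: poly_altdef)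
    also have "\<dots> \<le> (\<Sum>i\<le>degree H. \<bar>coeff H i * u ^ i\<bar>)" by (rule sum_abs)
    also have "\<dots> \<le> (\<Sum>i\<le>degree H. \<bar>coeff H i\<bar> * \<bar>u\<bar> ^ 10)"
    proof (rule sum_mono)
      fix i assume "i \<in> {..degree H}"
      show "\<bar>coeff H i * u ^ i\<bar> \<le> \<bar>coeff H i\<bar> * \<bar>u\<bar> ^ 10"
      proof (cases "i < 10")
        case True then show ?thesis using assms by simp
      next
        case False
        then have "\<bar>u\<bar> ^ i \<le> \<bar>u\<bar> ^ 10" using u by (intro power_decreasing) auto
        then show ?thesis by (simp add: abs_mult power_abs mult_left_mono)
      qed
    qed
    also have "\<dots> = C * \<bar>u\<bar> ^ 10" by (simp add: C_def sum_distrib_right)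
    finally show ?thesis .
  qed
  then show ?thesis unfolding small_def by (intro exI[of _ C] exI[of _ 1]) auto
qed

lemma ser_mult: "approx (\<lambda>u. ser c u * ser d u) (ser (cmul c d))"
proof -
  define H where "H = pol c * pol d - pol (cmul c d)"
  have "\<forall>i<10. coeff H i = 0"
  proof (intro allI impI)
    fix k :: nat assume k: "k < 10"
    have "coeff (pol c * pol d) k = (\<Sum>i\<le>k. coeff (pol c) i * coeff (pol d) (k - i))"
      by (rule coeff_mult)
    also have "\<dots> = (\<Sum>i\<le>k. c i * d (k - i))"
      using k by (intro sum.cong refl) (simp add: coeff_pol)
    finally show "coeff H k = 0" using k unfolding H_def coeff_diff coeff_pol cmul_def by simp
  qed
  then have "small (poly H)" by (rule small_highpoly)
  moreover have "poly H = (\<lambda>u. ser c u * ser d u - ser (cmul c d) u)"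
    by (simp add: fun_eq_iff H_def poly_pol poly_diff poly_mult)
  ultimately show ?thesis unfolding approx_def by simp
qed

lemma ser_cong: "(\<And>k. k < 10 \<Longrightarrow> c k = d k) \<Longrightarrow> ser c u = ser d u"
  unfolding ser_def by (intro sum.cong) auto

lemma ser_neg: "ser c (-u) = ser (\<lambda>i. (-1)^i * c i) u"
  unfolding ser_def by (intro sum.cong refl) (subst power_minus, simp only: ac_simps)

lemma ser_comb: "b0 + b1 * ser q1 u + b2 * ser q2 u + b3 * ser q3 u + b4 * ser q4 u
   = ser (\<lambda>k. (if k = 0 then b0 else 0) + b1 * q1 k + b2 * q2 k + b3 * q3 k + b4 * q4 k) u"
proof -
  have "ser (\<lambda>k. (if k = 0 then b0 else 0) + b1 * q1 k + b2 * q2 k + b3 * q3 k + b4 * q4 k) u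
     = (\<Sum>i<10. (if i = 0 then b0 else 0) * u^i) + b1 * ser q1 u + b2 * ser q2 u + b3 * ser q3 u + b4 * ser q4 u"
    unfolding ser_def by (simp add: sum.distrib sum_distrib_left algebra_simps)
  moreover have "(\<Sum>i<10. (if i = 0 then b0 else 0) * u^i) = b0"
    by (simp add: if_distrib[of "\<lambda>x. x * u^_"] sum.delta cong: if_cong)
  ultimately show ?thesis by simp
qed

lemma ser_lin_fact: assumes "c 0 = 0" shows "ser c u = u * (\<Sum>i<9. c (Suc i) * u ^ i)"
proof -
  have "ser c u = (\<Sum>i<Suc 9. c i * u ^ i)" by (simp add: ser_def)
  also have "\<dots> = c 0 * u^0 + (\<Sum>i<9. c (Suc i) * u ^ Suc i)" by (rule sum.lessThan_Suc_shift)
  also have "\<dots> = u * (\<Sum>i<9. c (Suc i) * u ^ i)" using assms by (simp add: sum_distrib_left mult.left_commute)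
  finally show ?thesis .
qed

lemma ser_cont: "isCont (ser c) x"
  unfolding ser_def[abs_def] by (intro continuous_intros)

lemma all10: "(\<forall>k<10. P k) \<longleftrightarrow> P 0 \<and> P 1 \<and> P 2 \<and> P 3 \<and> P 4 \<and> P 5 \<and> P 6 \<and> P 7 \<and> P 8 \<and> P (9::nat)"
proof
  assume "\<forall>k<10. P k" then show "P 0 \<and> P 1 \<and> P 2 \<and> P 3 \<and> P 4 \<and> P 5 \<and> P 6 \<and> P 7 \<and> P 8 \<and> P (9::nat)"
    by simp
next
  assume h: "P 0 \<and> P 1 \<and> P 2 \<and> P 3 \<and> P 4 \<and> P 5 \<and> P 6 \<and> P 7 \<and> P 8 \<and> P (9::nat)"
  show "\<forall>k<10. P k"
  proof (intro allI impI)
    fix k :: nat assume "k < 10"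
    then have "k = 0 \<or> k = 1 \<or> k = 2 \<or> k = 3 \<or> k = 4 \<or> k = 5 \<or> k = 6 \<or> k = 7 \<or> k = 8 \<or> k = 9" by arith
    with h show "P k" by blast
  qed
qed

lemma approx_div2:
  assumes "approx n pn" "approx d pd" "isCont q 0" "isCont pd 0"
    "approx pn (\<lambda>u. q u * pd u)" "bndinv d"
  shows "approx (\<lambda>u. n u / d u) q"
proof -
  have "approx (\<lambda>u. q u * d u) (\<lambda>u. q u * pd u)"
    using assms by (intro approx_mult approx_refl bnd_cont) auto
  from approx_diff[OF assms(1) this] have "approx (\<lambda>u. n u - q u * d u) (\<lambda>u. pn u - q u * pd u)" .
  moreover have "approx (\<lambda>u. pn u - q u * pd u) (\<lambda>u. 0)"
    using assms(5) unfolding approx_def by simp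
  ultimately have sm: "small (\<lambda>u. n u - q u * d u)"
    unfolding approx_def using approx_trans[unfolded approx_def] by fastforce
  obtain c \<delta> where c: "c > 0" "\<delta> > 0" "\<And>u. \<bar>u\<bar> < \<delta> \<Longrightarrow> \<bar>d u\<bar> \<ge> c"
    using assms(6) unfolding bndinv_def by blast
  have "small (\<lambda>u. (n u - q u * d u) * (1 / d u))"
    by (intro small_mult sm bndinv_bnd assms)
  then show ?thesis unfolding approx_def
  proof (rule small_cong2[OF _ c(2)])
    fix u assume "\<bar>u\<bar> < \<delta>"
    then have "d u \<noteq> 0" using c(1) c(3)[of u] by auto
    then show "n u / d u - q u = (n u - q u * d u) * (1 / d u)" by (simp add: field_simps)
  qed
qed

lemma ser_mult_eq: "\<forall>k<10. cmul c d k = e k \<Longrightarrow> approx (\<lambda>u. ser c u * ser d u) (ser e)"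
proof -
  assume h: "\<forall>k<10. cmul c d k = e k"
  have "ser (cmul c d) = ser e" using h by (intro ext ser_cong) auto
  then show ?thesis using ser_mult[of c d] by simp
qed

lemma approx_div_ser:
  assumes "approx n (ser pn)" "approx d (ser pd)" "\<forall>k<10. cmul q pd k = pn k" "bndinv d"
  shows "approx (\<lambda>u. n u / d u) (ser q)"
  by (rule approx_div2[OF assms(1,2) ser_cont ser_cont approx_sym[OF ser_mult_eq[OF assms(3)]] assms(4)])

lemma approx_mult_ser:
  assumes "approx f (ser c)" "approx g (ser d)" "\<forall>k<10. cmul c d k = e k"
  shows "approx (\<lambda>u. f u * g u) (ser e)"
proof -
  have "approx (\<lambda>u. f u * g u) (\<lambda>u. ser c u * ser d u)"
    by (rule approx_mult[OF assms(1,2)]) (auto intro: approx_bnd[OF assms(1)] bnd_cont ser_cont)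
  then show ?thesis using approx_trans ser_mult_eq[OF assms(3)] by blast
qed

lemma lin_ser: assumes "approx v (ser c)" "c 0 = 0" shows "lin v"
  by (rule lin_approx[OF assms(1), of "\<lambda>u. (\<Sum>i<9. c (Suc i) * u ^ i)"])
    (use ser_lin_fact[of c] assms(2) in \<open>auto intro!: continuous_intros\<close>)

lemma approx_Fcomp_ser:
  assumes F: "approx F (\<lambda>u. 1 + a1*u^2 + a2*u^4 + a3*u^6 + a4*u^8)"
  and v: "approx v (ser c)" "c 0 = 0"
  and ch: "\<forall>k<10. cmul c c k = q2 k" "\<forall>k<10. cmul q2 q2 k = q4 k"
      "\<forall>k<10. cmul q4 q2 k = q6 k" "\<forall>k<10. cmul q4 q4 k = q8 k"
  and fc: "\<forall>k<10. f k = (if k = 0 then 1 else 0) + a1 * q2 k + a2 * q4 k + a3 * q6 k + a4 * q8 k"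
  shows "approx (\<lambda>u. F (v u)) (ser f)"
proof -
  have l: "lin v" by (rule lin_ser[OF v])
  have 1: "approx (\<lambda>u. F (v u)) (\<lambda>u. 1 + a1*(v u)^2 + a2*(v u)^4 + a3*(v u)^6 + a4*(v u)^8)"
    using approx_comp[OF F l] by simp
  have X: "approx (\<lambda>u. v u * v u) (ser q2)" by (rule approx_mult_ser[OF v(1) v(1) ch(1)])
  have X2: "approx (\<lambda>u. (v u * v u) * (v u * v u)) (ser q4)" by (rule approx_mult_ser[OF X X ch(2)])
  have X3: "approx (\<lambda>u. ((v u * v u) * (v u * v u)) * (v u * v u)) (ser q6)" by (rule approx_mult_ser[OF X2 X ch(3)])
  have X4: "approx (\<lambda>u. ((v u * v u) * (v u * v u)) * ((v u * v u) * (v u * v u))) (ser q8)"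
    by (rule approx_mult_ser[OF X2 X2 ch(4)])
  have 2: "approx (\<lambda>u. 1 + a1 * (v u * v u) + a2 * ((v u * v u) * (v u * v u))
     + a3 * (((v u * v u) * (v u * v u)) * (v u * v u))
     + a4 * (((v u * v u) * (v u * v u)) * ((v u * v u) * (v u * v u))))
     (\<lambda>u. 1 + a1 * ser q2 u + a2 * ser q4 u + a3 * ser q6 u + a4 * ser q8 u)"
    by (intro approx_add approx_cmult approx_refl X X2 X3 X4)
  have 3: "(\<lambda>u. 1 + a1 * ser q2 u + a2 * ser q4 u + a3 * ser q6 u + a4 * ser q8 u) = ser f"
    unfolding ser_comb using fc by (intro ext ser_cong[symmetric]) auto
  show ?thesis
    apply (rule approx_trans[OF 1])
    apply (rule approx_trans[OF _ 2[unfolded 3]])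
    apply (rule approx_cong)
    apply (simp add: power2_eq_square power4_eq_xxxx)
    apply (simp add: eval_nat_numeral algebra_simps)
    done
qed


lemma cmul_0: "cmul c d 0 = c 0 * d 0"
  by (simp add: cmul_def atMost_nat_numeral)

lemma cmul_1: "cmul c d 1 = c 0 * d 1 + c 1 * d 0"
  by (simp add: cmul_def atMost_nat_numeral)

lemma cmul_2: "cmul c d 2 = c 0 * d 2 + c 1 * d 1 + c 2 * d 0"
  by (simp add: cmul_def atMost_nat_numeral)

lemma cmul_3: "cmul c d 3 = c 0 * d 3 + c 1 * d 2 + c 2 * d 1 + c 3 * d 0"
  by (simp add: cmul_def atMost_nat_numeral)

lemma cmul_4: "cmul c d 4 = c 0 * d 4 + c 1 * d 3 + c 2 * d 2 + c 3 * d 1 + c 4 * d 0"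
  by (simp add: cmul_def atMost_nat_numeral)

lemma cmul_5: "cmul c d 5 = c 0 * d 5 + c 1 * d 4 + c 2 * d 3 + c 3 * d 2 + c 4 * d 1 + c 5 * d 0"
  by (simp add: cmul_def atMost_nat_numeral)

lemma cmul_6: "cmul c d 6 = c 0 * d 6 + c 1 * d 5 + c 2 * d 4 + c 3 * d 3 + c 4 * d 2 + c 5 * d 1 + c 6 * d 0"
  by (simp add: cmul_def atMost_nat_numeral)

lemma cmul_7: "cmul c d 7 = c 0 * d 7 + c 1 * d 6 + c 2 * d 5 + c 3 * d 4 + c 4 * d 3 + c 5 * d 2 + c 6 * d 1 + c 7 * d 0"
  by (simp add: cmul_def atMost_nat_numeral)

lemma cmul_8: "cmul c d 8 = c 0 * d 8 + c 1 * d 7 + c 2 * d 6 + c 3 * d 5 + c 4 * d 4 + c 5 * d 3 + c 6 * d 2 + c 7 * d 1 + c 8 * d 0"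
  by (simp add: cmul_def atMost_nat_numeral)

lemma cmul_9: "cmul c d 9 = c 0 * d 9 + c 1 * d 8 + c 2 * d 7 + c 3 * d 6 + c 4 * d 5 + c 5 * d 4 + c 6 * d 3 + c 7 * d 2 + c 8 * d 1 + c 9 * d 0"
  by (simp add: cmul_def atMost_nat_numeral)
definition Pc :: "real \<Rightarrow> real \<Rightarrow> real \<Rightarrow> real \<Rightarrow> nat \<Rightarrow> real" where
  "Pc a1 a2 a3 a4 k = (if k = 0 then 1 else if k = 1 then 0 else if k = 2 then 1*a1 else if k = 3 then 0 else if k = 4 then 1*a2 else if k = 5 then 0 else if k = 6 then 1*a3 else if k = 7 then 0 else if k = 8 then 1*a4 else if k = 9 then 0 else 0)"

lemma Pc_idx:
  "Pc a1 a2 a3 a4 0 = 1"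
  "Pc a1 a2 a3 a4 1 = 0"
  "Pc a1 a2 a3 a4 2 = 1*a1"
  "Pc a1 a2 a3 a4 3 = 0"
  "Pc a1 a2 a3 a4 4 = 1*a2"
  "Pc a1 a2 a3 a4 5 = 0"
  "Pc a1 a2 a3 a4 6 = 1*a3"
  "Pc a1 a2 a3 a4 7 = 0"
  "Pc a1 a2 a3 a4 8 = 1*a4"
  "Pc a1 a2 a3 a4 9 = 0"
  by (simp_all add: Pc_def)

definition pc1c :: "real \<Rightarrow> real \<Rightarrow> real \<Rightarrow> real \<Rightarrow> nat \<Rightarrow> real" where
  "pc1c a1 a2 a3 a4 k = (if k = 0 then 1 else if k = 1 then (-1/2) else if k = 2 then (1/2)*a1 else if k = 3 then 0 else if k = 4 then (1/2)*a2 else if k = 5 then 0 else if k = 6 then (1/2)*a3 else if k = 7 then 0 else if k = 8 then (1/2)*a4 else if k = 9 then 0 else 0)"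

lemma pc1c_idx:
  "pc1c a1 a2 a3 a4 0 = 1"
  "pc1c a1 a2 a3 a4 1 = (-1/2)"
  "pc1c a1 a2 a3 a4 2 = (1/2)*a1"
  "pc1c a1 a2 a3 a4 3 = 0"
  "pc1c a1 a2 a3 a4 4 = (1/2)*a2"
  "pc1c a1 a2 a3 a4 5 = 0"
  "pc1c a1 a2 a3 a4 6 = (1/2)*a3"
  "pc1c a1 a2 a3 a4 7 = 0"
  "pc1c a1 a2 a3 a4 8 = (1/2)*a4"
  "pc1c a1 a2 a3 a4 9 = 0"
  by (simp_all add: pc1c_def)

definition pd1c :: "real \<Rightarrow> real \<Rightarrow> real \<Rightarrow> real \<Rightarrow> nat \<Rightarrow> real" where
  "pd1c a1 a2 a3 a4 k = (if k = 0 then 0 else if k = 1 then (1/2) else if k = 2 then (1/2)*a1 else if k = 3 then 0 else if k = 4 then (1/2)*a2 else if k = 5 then 0 else if k = 6 then (1/2)*a3 else if k = 7 then 0 else if k = 8 then (1/2)*a4 else if k = 9 then 0 else 0)"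

lemma pd1c_idx:
  "pd1c a1 a2 a3 a4 0 = 0"
  "pd1c a1 a2 a3 a4 1 = (1/2)"
  "pd1c a1 a2 a3 a4 2 = (1/2)*a1"
  "pd1c a1 a2 a3 a4 3 = 0"
  "pd1c a1 a2 a3 a4 4 = (1/2)*a2"
  "pd1c a1 a2 a3 a4 5 = 0"
  "pd1c a1 a2 a3 a4 6 = (1/2)*a3"
  "pd1c a1 a2 a3 a4 7 = 0"
  "pd1c a1 a2 a3 a4 8 = (1/2)*a4"
  "pd1c a1 a2 a3 a4 9 = 0"
  by (simp_all add: pd1c_def)

definition pvc :: "real \<Rightarrow> real \<Rightarrow> real \<Rightarrow> real \<Rightarrow> nat \<Rightarrow> real" where
  "pvc a1 a2 a3 a4 k = (if k = 0 then 0 else if k = 1 then (1/2) else if k = 2 then (1/4) + (1/2)*a1 else if k = 3 then (1/8) else if k = 4 then (1/16) + (1/2)*a2 + (-1/8)*a1 + (-1/4)*a1^2 else if k = 5 then (1/32) + (-1/8)*a1 + (-1/8)*a1^2 else if k = 6 then (1/64) + (1/2)*a3 + (-1/8)*a2 + (-3/32)*a1 + (-1/2)*a1*a2 + (1/8)*a1^3 else if k = 7 then (1/128) + (-1/8)*a2 + (-1/16)*a1 + (-1/4)*a1*a2 + (1/16)*a1^2 + (1/8)*a1^3 else if k = 8 then (1/256) + (1/2)*a4 + (-1/8)*a3 + (-3/32)*a2 + (-1/4)*a2^2 + (-5/128)*a1 + (-1/2)*a1*a3 + (5/64)*a1^2 + (3/8)*a1^2*a2 + (1/16)*a1^3 +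 (-1/16)*a1^4 else if k = 9 then (1/512) + (-1/8)*a3 + (-1/16)*a2 + (-1/8)*a2^2 + (-3/128)*a1 + (-1/4)*a1*a3 + (1/8)*a1*a2 + (9/128)*a1^2 + (3/8)*a1^2*a2 + (-3/32)*a1^4 else 0)"

lemma pvc_idx:
  "pvc a1 a2 a3 a4 0 = 0"
  "pvc a1 a2 a3 a4 1 = (1/2)"
  "pvc a1 a2 a3 a4 2 = (1/4) + (1/2)*a1"
  "pvc a1 a2 a3 a4 3 = (1/8)"
  "pvc a1 a2 a3 a4 4 = (1/16) + (1/2)*a2 + (-1/8)*a1 + (-1/4)*a1^2"
  "pvc a1 a2 a3 a4 5 = (1/32) + (-1/8)*a1 + (-1/8)*a1^2"
  "pvc a1 a2 a3 a4 6 = (1/64) + (1/2)*a3 + (-1/8)*a2 + (-3/32)*a1 + (-1/2)*a1*a2 + (1/8)*a1^3"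
  "pvc a1 a2 a3 a4 7 = (1/128) + (-1/8)*a2 + (-1/16)*a1 + (-1/4)*a1*a2 + (1/16)*a1^2 + (1/8)*a1^3"
  "pvc a1 a2 a3 a4 8 = (1/256) + (1/2)*a4 + (-1/8)*a3 + (-3/32)*a2 + (-1/4)*a2^2 + (-5/128)*a1 + (-1/2)*a1*a3 + (5/64)*a1^2 + (3/8)*a1^2*a2 + (1/16)*a1^3 + (-1/16)*a1^4"
  "pvc a1 a2 a3 a4 9 = (1/512) + (-1/8)*a3 + (-1/16)*a2 + (-1/8)*a2^2 + (-3/128)*a1 + (-1/4)*a1*a3 + (1/8)*a1*a2 + (9/128)*a1^2 + (3/8)*a1^2*a2 + (-3/32)*a1^4"
  by (simp_all add: pvc_def)

definition qc2 :: "real \<Rightarrow> real \<Rightarrow> real \<Rightarrow> real \<Rightarrow> nat \<Rightarrow> real" where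
  "qc2 a1 a2 a3 a4 k = (if k = 0 then 0 else if k = 1 then 0 else if k = 2 then (1/4) else if k = 3 then (1/4) + (1/2)*a1 else if k = 4 then (3/16) + (1/4)*a1 + (1/4)*a1^2 else if k = 5 then (1/8) + (1/2)*a2 + (-1/4)*a1^2 else if k = 6 then (5/64) + (1/4)*a2 + (-1/8)*a1 + (1/2)*a1*a2 + (-3/8)*a1^2 + (-1/4)*a1^3 else if k = 7 then (3/64) + (1/2)*a3 + (-5/32)*a1 + (-1/2)*a1*a2 + (-1/4)*a1^2 else if k = 8 then (7/256) + (1/4)*a3 + (-1/8)*a2 + (1/4)*a2^2 + (-9/64)*a1 + (1/2)*a1*a3 + (-3/4)*a1*a2 + (-5/64)*a1^2 + (-3/4)*a1^2*a2 + (1/4)*a1^3 + (3/16)*a1^4 else if k = 9 then (1/64) + (1/2)*a4 + (-5/32)*a2 + (-1/4)*a2^2 + (-7/64)*a1 + (-1/2)*a1*a3 + (-1/2)*a1*a2 + (3/64)*a1^2 + (5/16)*a1^3 + (1/8)*a1^4 else 0)"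

lemma qc2_idx:
  "qc2 a1 a2 a3 a4 0 = 0"
  "qc2 a1 a2 a3 a4 1 = 0"
  "qc2 a1 a2 a3 a4 2 = (1/4)"
  "qc2 a1 a2 a3 a4 3 = (1/4) + (1/2)*a1"
  "qc2 a1 a2 a3 a4 4 = (3/16) + (1/4)*a1 + (1/4)*a1^2"
  "qc2 a1 a2 a3 a4 5 = (1/8) + (1/2)*a2 + (-1/4)*a1^2"
  "qc2 a1 a2 a3 a4 6 = (5/64) + (1/4)*a2 + (-1/8)*a1 + (1/2)*a1*a2 + (-3/8)*a1^2 + (-1/4)*a1^3"
  "qc2 a1 a2 a3 a4 7 = (3/64) + (1/2)*a3 + (-5/32)*a1 + (-1/2)*a1*a2 + (-1/4)*a1^2"
  "qc2 a1 a2 a3 a4 8 = (7/256) + (1/4)*a3 + (-1/8)*a2 + (1/4)*a2^2 + (-9/64)*a1 + (1/2)*a1*a3 + (-3/4)*a1*a2 + (-5/64)*a1^2 + (-3/4)*a1^2*a2 + (1/4)*a1^3 + (3/16)*a1^4"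
  "qc2 a1 a2 a3 a4 9 = (1/64) + (1/2)*a4 + (-5/32)*a2 + (-1/4)*a2^2 + (-7/64)*a1 + (-1/2)*a1*a3 + (-1/2)*a1*a2 + (3/64)*a1^2 + (5/16)*a1^3 + (1/8)*a1^4"
  by (simp_all add: qc2_def)

definition qc4 :: "real \<Rightarrow> real \<Rightarrow> real \<Rightarrow> real \<Rightarrow> nat \<Rightarrow> real" where
  "qc4 a1 a2 a3 a4 k = (if k = 0 then 0 else if k = 1 then 0 else if k = 2 then 0 else if k = 3 then 0 else if k = 4 then (1/16) else if k = 5 then (1/8) + (1/4)*a1 else if k = 6 then (5/32) + (3/8)*a1 + (3/8)*a1^2 else if k = 7 then (5/32) + (1/4)*a2 + (5/16)*a1 + (1/4)*a1^2 + (1/4)*a1^3 else if k = 8 then (35/256) + (3/8)*a2 + (5/32)*a1 + (3/4)*a1*a2 + (-5/32)*a1^2 + (-1/4)*a1^3 + (1/16)*a1^4 else if k = 9 then (7/64) + (1/4)*a3 + (5/16)*a2 + (1/2)*a1*a2 + (-15/32)*a1^2 + (3/4)*a1^2*a2 + (-5/8)*a1^3 + (-3/8)*a1^4 else 0)"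

lemma qc4_idx:
  "qc4 a1 a2 a3 a4 0 = 0"
  "qc4 a1 a2 a3 a4 1 = 0"
  "qc4 a1 a2 a3 a4 2 = 0"
  "qc4 a1 a2 a3 a4 3 = 0"
  "qc4 a1 a2 a3 a4 4 = (1/16)"
  "qc4 a1 a2 a3 a4 5 = (1/8) + (1/4)*a1"
  "qc4 a1 a2 a3 a4 6 = (5/32) + (3/8)*a1 + (3/8)*a1^2"
  "qc4 a1 a2 a3 a4 7 = (5/32) + (1/4)*a2 + (5/16)*a1 + (1/4)*a1^2 + (1/4)*a1^3"
  "qc4 a1 a2 a3 a4 8 = (35/256) + (3/8)*a2 + (5/32)*a1 + (3/4)*a1*a2 + (-5/32)*a1^2 + (-1/4)*a1^3 + (1/16)*a1^4"
  "qc4 a1 a2 a3 a4 9 = (7/64) + (1/4)*a3 + (5/16)*a2 + (1/2)*a1*a2 + (-15/32)*a1^2 + (3/4)*a1^2*a2 + (-5/8)*a1^3 + (-3/8)*a1^4"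
  by (simp_all add: qc4_def)

definition qc6 :: "real \<Rightarrow> real \<Rightarrow> real \<Rightarrow> real \<Rightarrow> nat \<Rightarrow> real" where
  "qc6 a1 a2 a3 a4 k = (if k = 0 then 0 else if k = 1 then 0 else if k = 2 then 0 else if k = 3 then 0 else if k = 4 then 0 else if k = 5 then 0 else if k = 6 then (1/64) else if k = 7 then (3/64) + (3/32)*a1 else if k = 8 then (21/256) + (15/64)*a1 + (15/64)*a1^2 else if k = 9 then (7/64) + (3/32)*a2 + (21/64)*a1 + (27/64)*a1^2 + (5/16)*a1^3 else 0)"

lemma qc6_idx:
  "qc6 a1 a2 a3 a4 0 = 0"
  "qc6 a1 a2 a3 a4 1 = 0"
  "qc6 a1 a2 a3 a4 2 = 0"
  "qc6 a1 a2 a3 a4 3 = 0"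
  "qc6 a1 a2 a3 a4 4 = 0"
  "qc6 a1 a2 a3 a4 5 = 0"
  "qc6 a1 a2 a3 a4 6 = (1/64)"
  "qc6 a1 a2 a3 a4 7 = (3/64) + (3/32)*a1"
  "qc6 a1 a2 a3 a4 8 = (21/256) + (15/64)*a1 + (15/64)*a1^2"
  "qc6 a1 a2 a3 a4 9 = (7/64) + (3/32)*a2 + (21/64)*a1 + (27/64)*a1^2 + (5/16)*a1^3"
  by (simp_all add: qc6_def)

definition qc8 :: "real \<Rightarrow> real \<Rightarrow> real \<Rightarrow> real \<Rightarrow> nat \<Rightarrow> real" where
  "qc8 a1 a2 a3 a4 k = (if k = 0 then 0 else if k = 1 then 0 else if k = 2 then 0 else if k = 3 then 0 else if k = 4 then 0 else if k = 5 then 0 else if k = 6 then 0 else if k = 7 then 0 else if k = 8 then (1/256) else if k = 9 then (1/64) + (1/32)*a1 else 0)"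

lemma qc8_idx:
  "qc8 a1 a2 a3 a4 0 = 0"
  "qc8 a1 a2 a3 a4 1 = 0"
  "qc8 a1 a2 a3 a4 2 = 0"
  "qc8 a1 a2 a3 a4 3 = 0"
  "qc8 a1 a2 a3 a4 4 = 0"
  "qc8 a1 a2 a3 a4 5 = 0"
  "qc8 a1 a2 a3 a4 6 = 0"
  "qc8 a1 a2 a3 a4 7 = 0"
  "qc8 a1 a2 a3 a4 8 = (1/256)"
  "qc8 a1 a2 a3 a4 9 = (1/64) + (1/32)*a1"
  by (simp_all add: qc8_def)

definition pF1c :: "real \<Rightarrow> real \<Rightarrow> real \<Rightarrow> real \<Rightarrow> nat \<Rightarrow> real" where
  "pF1c a1 a2 a3 a4 k = (if k = 0 then 1 else if k = 1 then 0 else if k = 2 then (1/4)*a1 else if k = 3 then (1/4)*a1 + (1/2)*a1^2 else if k = 4 then (1/16)*a2 + (3/16)*a1 + (1/4)*a1^2 + (1/4)*a1^3 else if k = 5 then (1/8)*a2 + (1/8)*a1 + (3/4)*a1*a2 + (-1/4)*a1^3 else if k = 6 then (1/64)*a3 + (5/32)*a2 + (5/64)*a1 + (5/8)*a1*a2 + (-1/8)*a1^2 + (7/8)*a1^2*a2 + (-3/8)*a1^3 + (-1/4)*a1^4 else if k = 7 then (3/64)*a3 + (5/32)*a2 + (1/4)*a2^2 + (3/64)*a1 + (19/32)*a1*a3 + (5/16)*a1*a2 + (-5/32)*a1^2 + (-1/4)*a1^2*a2 + (-1/4)*a1^3 + (1/4)*a1^3*a2 else if k = 8 then (1/256)*a4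 + (21/256)*a3 + (35/256)*a2 + (3/8)*a2^2 + (7/256)*a1 + (31/64)*a1*a3 + (1/32)*a1*a2 + 1*a1*a2^2 + (-9/64)*a1^2 + (47/64)*a1^2*a3 + (-29/32)*a1^2*a2 + (-5/64)*a1^3 + (-1)*a1^3*a2 + (1/4)*a1^4 + (1/16)*a1^4*a2 + (3/16)*a1^5 else if k = 9 then (1/64)*a4 + (7/64)*a3 + (7/64)*a2 + (11/32)*a2*a3 + (5/16)*a2^2 + (1/64)*a1 + (17/32)*a1*a4 + (21/64)*a1*a3 + (-5/32)*a1*a2 + (1/4)*a1*a2^2 + (-7/64)*a1^2 + (-5/64)*a1^2*a3 + (-31/32)*a1^2*a2 + (3/4)*a1^2*a2^2 + (3/64)*a1^3 + (5/16)*a1^3*a3 + (-5/8)*a1^3*a2 + (5/16)*a1^4 + (-3/8)*a1^4*a2 + (1/8)*a1^5 else 0)"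

lemma pF1c_idx:
  "pF1c a1 a2 a3 a4 0 = 1"
  "pF1c a1 a2 a3 a4 1 = 0"
  "pF1c a1 a2 a3 a4 2 = (1/4)*a1"
  "pF1c a1 a2 a3 a4 3 = (1/4)*a1 + (1/2)*a1^2"
  "pF1c a1 a2 a3 a4 4 = (1/16)*a2 + (3/16)*a1 + (1/4)*a1^2 + (1/4)*a1^3"
  "pF1c a1 a2 a3 a4 5 = (1/8)*a2 + (1/8)*a1 + (3/4)*a1*a2 + (-1/4)*a1^3"
  "pF1c a1 a2 a3 a4 6 = (1/64)*a3 + (5/32)*a2 + (5/64)*a1 + (5/8)*a1*a2 + (-1/8)*a1^2 + (7/8)*a1^2*a2 + (-3/8)*a1^3 + (-1/4)*a1^4"
  "pF1c a1 a2 a3 a4 7 = (3/64)*a3 + (5/32)*a2 + (1/4)*a2^2 + (3/64)*a1 + (19/32)*a1*a3 + (5/16)*a1*a2 + (-5/32)*a1^2 + (-1/4)*a1^2*a2 + (-1/4)*a1^3 + (1/4)*a1^3*a2"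
  "pF1c a1 a2 a3 a4 8 = (1/256)*a4 + (21/256)*a3 + (35/256)*a2 + (3/8)*a2^2 + (7/256)*a1 + (31/64)*a1*a3 + (1/32)*a1*a2 + 1*a1*a2^2 + (-9/64)*a1^2 + (47/64)*a1^2*a3 + (-29/32)*a1^2*a2 + (-5/64)*a1^3 + (-1)*a1^3*a2 + (1/4)*a1^4 + (1/16)*a1^4*a2 + (3/16)*a1^5"
  "pF1c a1 a2 a3 a4 9 = (1/64)*a4 + (7/64)*a3 + (7/64)*a2 + (11/32)*a2*a3 + (5/16)*a2^2 + (1/64)*a1 + (17/32)*a1*a4 + (21/64)*a1*a3 + (-5/32)*a1*a2 + (1/4)*a1*a2^2 + (-7/64)*a1^2 + (-5/64)*a1^2*a3 + (-31/32)*a1^2*a2 + (3/4)*a1^2*a2^2 + (3/64)*a1^3 + (5/16)*a1^3*a3 + (-5/8)*a1^3*a2 + (5/16)*a1^4 + (-3/8)*a1^4*a2 + (1/8)*a1^5"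
  by (simp_all add: pF1c_def)

definition pAc :: "real \<Rightarrow> real \<Rightarrow> real \<Rightarrow> real \<Rightarrow> nat \<Rightarrow> real" where
  "pAc a1 a2 a3 a4 k = (if k = 0 then 1 else if k = 1 then (-1/2) else if k = 2 then (3/4)*a1 else if k = 3 then (1/8)*a1 + (1/2)*a1^2 else if k = 4 then (9/16)*a2 + (1/16)*a1 + (1/8)*a1^2 + (1/4)*a1^3 else if k = 5 then (3/32)*a2 + (1/32)*a1 + (3/4)*a1*a2 + (-1/8)*a1^3 else if k = 6 then (33/64)*a3 + (3/32)*a2 + (1/64)*a1 + (13/32)*a1*a2 + (-1/32)*a1^2 + (7/8)*a1^2*a2 + (-1/8)*a1^3 + (-1/8)*a1^4 else if k = 7 then (5/128)*a3 + (5/64)*a2 + (1/4)*a2^2 + (1/128)*a1 + (19/32)*a1*a3 + (3/16)*a1*a2 + (-1/32)*a1^2 + (-1/16)*a1^2*a2 + (-1/16)*a1^3 + (1/4)*a1^3*a2 else if k = 8 then (129/256)*a4 + (15/256)*a3 + (15/256)*a2 + (9/32)*a2^2 + (1/256)*a1 + (41/128)*a1*a3 + (3/64)*a1*a2 + 1*a1*a2^2 + (-3/128)*a1^2 + (47/64)*a1^2*a3 + (-11/32)*a1^2*a2 + (-1/64)*a1^3 + (-9/16)*a1^3*a2 + (1/16)*a1^4 + (1/16)*a1^4*a2 + (1/16)*a1^5 else if k = 9 then (7/512)*a4 + (35/512)*a3 + (21/512)*a2 + (11/32)*a2*a3 + (3/16)*a2^2 + (1/512)*a1 + (17/32)*a1*a4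 + (15/64)*a1*a3 + (-1/32)*a1*a2 + (1/4)*a1*a2^2 + (-1/64)*a1^2 + (13/128)*a1^2*a3 + (-23/64)*a1^2*a2 + (3/4)*a1^2*a2^2 + (1/128)*a1^3 + (5/16)*a1^3*a3 + (-3/8)*a1^3*a2 + (1/16)*a1^4 + (-9/32)*a1^4*a2 + (1/32)*a1^5 else 0)"

lemma pAc_idx:
  "pAc a1 a2 a3 a4 0 = 1"
  "pAc a1 a2 a3 a4 1 = (-1/2)"
  "pAc a1 a2 a3 a4 2 = (3/4)*a1"
  "pAc a1 a2 a3 a4 3 = (1/8)*a1 + (1/2)*a1^2"
  "pAc a1 a2 a3 a4 4 = (9/16)*a2 + (1/16)*a1 + (1/8)*a1^2 + (1/4)*a1^3"
  "pAc a1 a2 a3 a4 5 = (3/32)*a2 + (1/32)*a1 + (3/4)*a1*a2 + (-1/8)*a1^3"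
  "pAc a1 a2 a3 a4 6 = (33/64)*a3 + (3/32)*a2 + (1/64)*a1 + (13/32)*a1*a2 + (-1/32)*a1^2 + (7/8)*a1^2*a2 + (-1/8)*a1^3 + (-1/8)*a1^4"
  "pAc a1 a2 a3 a4 7 = (5/128)*a3 + (5/64)*a2 + (1/4)*a2^2 + (1/128)*a1 + (19/32)*a1*a3 + (3/16)*a1*a2 + (-1/32)*a1^2 + (-1/16)*a1^2*a2 + (-1/16)*a1^3 + (1/4)*a1^3*a2"
  "pAc a1 a2 a3 a4 8 = (129/256)*a4 + (15/256)*a3 + (15/256)*a2 + (9/32)*a2^2 + (1/256)*a1 + (41/128)*a1*a3 + (3/64)*a1*a2 + 1*a1*a2^2 + (-3/128)*a1^2 + (47/64)*a1^2*a3 + (-11/32)*a1^2*a2 + (-1/64)*a1^3 + (-9/16)*a1^3*a2 + (1/16)*a1^4 + (1/16)*a1^4*a2 + (1/16)*a1^5"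
  "pAc a1 a2 a3 a4 9 = (7/512)*a4 + (35/512)*a3 + (21/512)*a2 + (11/32)*a2*a3 + (3/16)*a2^2 + (1/512)*a1 + (17/32)*a1*a4 + (15/64)*a1*a3 + (-1/32)*a1*a2 + (1/4)*a1*a2^2 + (-1/64)*a1^2 + (13/128)*a1^2*a3 + (-23/64)*a1^2*a2 + (3/4)*a1^2*a2^2 + (1/128)*a1^3 + (5/16)*a1^3*a3 + (-3/8)*a1^3*a2 + (1/16)*a1^4 + (-9/32)*a1^4*a2 + (1/32)*a1^5"
  by (simp_all add: pAc_def)

definition pSc :: "real \<Rightarrow> real \<Rightarrow> real \<Rightarrow> real \<Rightarrow> nat \<Rightarrow> real" where
  "pSc a1 a2 a3 a4 k = (if k = 0 then 2 else if k = 1 then 0 else if k = 2 then (3/2)*a1 else if k = 3 then 0 else if k = 4 then (9/8)*a2 + (1/8)*a1 + (1/4)*a1^2 + (1/2)*a1^3 else if k = 5 then 0 else if k = 6 then (33/32)*a3 + (3/16)*a2 + (1/32)*a1 + (13/16)*a1*a2 + (-1/16)*a1^2 + (7/4)*a1^2*a2 + (-1/4)*a1^3 + (-1/4)*a1^4 else if k = 7 then 0 else if k = 8 then (129/128)*a4 + (15/128)*a3 + (15/128)*a2 + (9/16)*a2^2 + (1/128)*a1 + (41/64)*a1*a3 + (3/32)*a1*a2 + 2*a1*a2^2 + (-3/64)*a1^2 + (47/32)*a1^2*a3 + (-11/16)*a1^2*a2 + (-1/32)*a1^3 + (-9/8)*a1^3*a2 + (1/8)*a1^4 + (1/8)*a1^4*a2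 + (1/8)*a1^5 else if k = 9 then 0 else 0)"

lemma pSc_idx:
  "pSc a1 a2 a3 a4 0 = 2"
  "pSc a1 a2 a3 a4 1 = 0"
  "pSc a1 a2 a3 a4 2 = (3/2)*a1"
  "pSc a1 a2 a3 a4 3 = 0"
  "pSc a1 a2 a3 a4 4 = (9/8)*a2 + (1/8)*a1 + (1/4)*a1^2 + (1/2)*a1^3"
  "pSc a1 a2 a3 a4 5 = 0"
  "pSc a1 a2 a3 a4 6 = (33/32)*a3 + (3/16)*a2 + (1/32)*a1 + (13/16)*a1*a2 + (-1/16)*a1^2 + (7/4)*a1^2*a2 + (-1/4)*a1^3 + (-1/4)*a1^4"
  "pSc a1 a2 a3 a4 7 = 0"
  "pSc a1 a2 a3 a4 8 = (129/128)*a4 + (15/128)*a3 + (15/128)*a2 + (9/16)*a2^2 + (1/128)*a1 + (41/64)*a1*a3 + (3/32)*a1*a2 + 2*a1*a2^2 + (-3/64)*a1^2 + (47/32)*a1^2*a3 + (-11/16)*a1^2*a2 + (-1/32)*a1^3 + (-9/8)*a1^3*a2 + (1/8)*a1^4 + (1/8)*a1^4*a2 + (1/8)*a1^5"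
  "pSc a1 a2 a3 a4 9 = 0"
  by (simp_all add: pSc_def)

definition pDc :: "real \<Rightarrow> real \<Rightarrow> real \<Rightarrow> real \<Rightarrow> nat \<Rightarrow> real" where
  "pDc a1 a2 a3 a4 k = (if k = 0 then 0 else if k = 1 then 1 else if k = 2 then 0 else if k = 3 then (-1/4)*a1 + (-1)*a1^2 else if k = 4 then 0 else if k = 5 then (-3/16)*a2 + (-1/16)*a1 + (-3/2)*a1*a2 + (1/4)*a1^3 else if k = 6 then 0 else if k = 7 then (-5/64)*a3 + (-5/32)*a2 + (-1/2)*a2^2 + (-1/64)*a1 + (-19/16)*a1*a3 + (-3/8)*a1*a2 + (1/16)*a1^2 + (1/8)*a1^2*a2 + (1/8)*a1^3 + (-1/2)*a1^3*a2 else if k = 8 then 0 else if k = 9 then (-7/256)*a4 + (-35/256)*a3 + (-21/256)*a2 + (-11/16)*a2*a3 + (-3/8)*a2^2 + (-1/256)*a1 + (-17/16)*a1*a4 + (-15/32)*a1*a3 + (1/16)*a1*a2 + (-1/2)*a1*a2^2 + (1/32)*a1^2 + (-13/64)*a1^2*a3 + (23/32)*a1^2*a2 + (-3/2)*a1^2*a2^2 + (-1/64)*a1^3 + (-5/8)*a1^3*a3 + (3/4)*a1^3*a2 + (-1/8)*a1^4 + (9/16)*a1^4*a2 + (-1/16)*a1^5 else 0)"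

lemma pDc_idx:
  "pDc a1 a2 a3 a4 0 = 0"
  "pDc a1 a2 a3 a4 1 = 1"
  "pDc a1 a2 a3 a4 2 = 0"
  "pDc a1 a2 a3 a4 3 = (-1/4)*a1 + (-1)*a1^2"
  "pDc a1 a2 a3 a4 4 = 0"
  "pDc a1 a2 a3 a4 5 = (-3/16)*a2 + (-1/16)*a1 + (-3/2)*a1*a2 + (1/4)*a1^3"
  "pDc a1 a2 a3 a4 6 = 0"
  "pDc a1 a2 a3 a4 7 = (-5/64)*a3 + (-5/32)*a2 + (-1/2)*a2^2 + (-1/64)*a1 + (-19/16)*a1*a3 + (-3/8)*a1*a2 + (1/16)*a1^2 + (1/8)*a1^2*a2 + (1/8)*a1^3 + (-1/2)*a1^3*a2"
  "pDc a1 a2 a3 a4 8 = 0"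
  "pDc a1 a2 a3 a4 9 = (-7/256)*a4 + (-35/256)*a3 + (-21/256)*a2 + (-11/16)*a2*a3 + (-3/8)*a2^2 + (-1/256)*a1 + (-17/16)*a1*a4 + (-15/32)*a1*a3 + (1/16)*a1*a2 + (-1/2)*a1*a2^2 + (1/32)*a1^2 + (-13/64)*a1^2*a3 + (23/32)*a1^2*a2 + (-3/2)*a1^2*a2^2 + (-1/64)*a1^3 + (-5/8)*a1^3*a3 + (3/4)*a1^3*a2 + (-1/8)*a1^4 + (9/16)*a1^4*a2 + (-1/16)*a1^5"
  by (simp_all add: pDc_def)

definition pwc :: "real \<Rightarrow> real \<Rightarrow> real \<Rightarrow> real \<Rightarrow> nat \<Rightarrow> real" where
  "pwc a1 a2 a3 a4 k = (if k = 0 then 0 else if k = 1 then (1/2) else if k = 2 then 0 else if k = 3 then (-1/2)*a1 + (-1/2)*a1^2 else if k = 4 then 0 else if k = 5 then (-3/8)*a2 + (-1/16)*a1 + (-3/4)*a1*a2 + (5/16)*a1^2 + (3/8)*a1^3 else if k = 6 then 0 else if k = 7 then (-19/64)*a3 + (-1/8)*a2 + (-1/4)*a2^2 + (-1/64)*a1 + (-19/32)*a1*a3 + (11/64)*a1*a2 + (1/8)*a1^2 + (15/32)*a1^2*a2 + (-1/64)*a1^3 + (-1/4)*a1^3*a2 + (-1/32)*a1^4 + (1/8)*a1^5 else if k = 8 then 0 else if k = 9 then (-17/64)*a4 + (-25/256)*a3 + (-9/128)*a2 + (-11/32)*a2*a3 + (-15/128)*a2^2 + (-1/256)*a1 + (-17/32)*a1*a4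 + (11/128)*a1*a3 + (53/256)*a1*a2 + (-9/64)*a1*a2^2 + (13/256)*a1^2 + (15/64)*a1^2*a3 + (73/128)*a1^2*a2 + (-3/4)*a1^2*a2^2 + (-29/256)*a1^3 + (-5/16)*a1^3*a3 + (59/64)*a1^3*a2 + (-53/256)*a1^4 + (17/16)*a1^4*a2 + (-37/128)*a1^5 + (-1/4)*a1^6 else 0)"

lemma pwc_idx:
  "pwc a1 a2 a3 a4 0 = 0"
  "pwc a1 a2 a3 a4 1 = (1/2)"
  "pwc a1 a2 a3 a4 2 = 0"
  "pwc a1 a2 a3 a4 3 = (-1/2)*a1 + (-1/2)*a1^2"
  "pwc a1 a2 a3 a4 4 = 0"
  "pwc a1 a2 a3 a4 5 = (-3/8)*a2 + (-1/16)*a1 + (-3/4)*a1*a2 + (5/16)*a1^2 + (3/8)*a1^3"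
  "pwc a1 a2 a3 a4 6 = 0"
  "pwc a1 a2 a3 a4 7 = (-19/64)*a3 + (-1/8)*a2 + (-1/4)*a2^2 + (-1/64)*a1 + (-19/32)*a1*a3 + (11/64)*a1*a2 + (1/8)*a1^2 + (15/32)*a1^2*a2 + (-1/64)*a1^3 + (-1/4)*a1^3*a2 + (-1/32)*a1^4 + (1/8)*a1^5"
  "pwc a1 a2 a3 a4 8 = 0"
  "pwc a1 a2 a3 a4 9 = (-17/64)*a4 + (-25/256)*a3 + (-9/128)*a2 + (-11/32)*a2*a3 + (-15/128)*a2^2 + (-1/256)*a1 + (-17/32)*a1*a4 + (11/128)*a1*a3 + (53/256)*a1*a2 + (-9/64)*a1*a2^2 + (13/256)*a1^2 + (15/64)*a1^2*a3 + (73/128)*a1^2*a2 + (-3/4)*a1^2*a2^2 + (-29/256)*a1^3 + (-5/16)*a1^3*a3 + (59/64)*a1^3*a2 + (-53/256)*a1^4 + (17/16)*a1^4*a2 + (-37/128)*a1^5 + (-1/4)*a1^6"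
  by (simp_all add: pwc_def)

definition wc2 :: "real \<Rightarrow> real \<Rightarrow> real \<Rightarrow> real \<Rightarrow> nat \<Rightarrow> real" where
  "wc2 a1 a2 a3 a4 k = (if k = 0 then 0 else if k = 1 then 0 else if k = 2 then (1/4) else if k = 3 then 0 else if k = 4 then (-1/2)*a1 + (-1/2)*a1^2 else if k = 5 then 0 else if k = 6 then (-3/8)*a2 + (-1/16)*a1 + (-3/4)*a1*a2 + (9/16)*a1^2 + (7/8)*a1^3 + (1/4)*a1^4 else if k = 7 then 0 else if k = 8 then (-19/64)*a3 + (-1/8)*a2 + (-1/4)*a2^2 + (-1/64)*a1 + (-19/32)*a1*a3 + (35/64)*a1*a2 + (3/16)*a1^2 + (51/32)*a1^2*a2 + (-17/64)*a1^3 + (1/2)*a1^3*a2 + (-23/32)*a1^4 + (-1/4)*a1^5 else if k = 9 then 0 else 0)"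

lemma wc2_idx:
  "wc2 a1 a2 a3 a4 0 = 0"
  "wc2 a1 a2 a3 a4 1 = 0"
  "wc2 a1 a2 a3 a4 2 = (1/4)"
  "wc2 a1 a2 a3 a4 3 = 0"
  "wc2 a1 a2 a3 a4 4 = (-1/2)*a1 + (-1/2)*a1^2"
  "wc2 a1 a2 a3 a4 5 = 0"
  "wc2 a1 a2 a3 a4 6 = (-3/8)*a2 + (-1/16)*a1 + (-3/4)*a1*a2 + (9/16)*a1^2 + (7/8)*a1^3 + (1/4)*a1^4"
  "wc2 a1 a2 a3 a4 7 = 0"
  "wc2 a1 a2 a3 a4 8 = (-19/64)*a3 + (-1/8)*a2 + (-1/4)*a2^2 + (-1/64)*a1 + (-19/32)*a1*a3 + (35/64)*a1*a2 + (3/16)*a1^2 + (51/32)*a1^2*a2 + (-17/64)*a1^3 + (1/2)*a1^3*a2 + (-23/32)*a1^4 + (-1/4)*a1^5"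
  "wc2 a1 a2 a3 a4 9 = 0"
  by (simp_all add: wc2_def)

definition wc4 :: "real \<Rightarrow> real \<Rightarrow> real \<Rightarrow> real \<Rightarrow> nat \<Rightarrow> real" where
  "wc4 a1 a2 a3 a4 k = (if k = 0 then 0 else if k = 1 then 0 else if k = 2 then 0 else if k = 3 then 0 else if k = 4 then (1/16) else if k = 5 then 0 else if k = 6 then (-1/4)*a1 + (-1/4)*a1^2 else if k = 7 then 0 else if k = 8 then (-3/16)*a2 + (-1/32)*a1 + (-3/8)*a1*a2 + (17/32)*a1^2 + (15/16)*a1^3 + (3/8)*a1^4 else if k = 9 then 0 else 0)"

lemma wc4_idx:
  "wc4 a1 a2 a3 a4 0 = 0"
  "wc4 a1 a2 a3 a4 1 = 0"
  "wc4 a1 a2 a3 a4 2 = 0"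
  "wc4 a1 a2 a3 a4 3 = 0"
  "wc4 a1 a2 a3 a4 4 = (1/16)"
  "wc4 a1 a2 a3 a4 5 = 0"
  "wc4 a1 a2 a3 a4 6 = (-1/4)*a1 + (-1/4)*a1^2"
  "wc4 a1 a2 a3 a4 7 = 0"
  "wc4 a1 a2 a3 a4 8 = (-3/16)*a2 + (-1/32)*a1 + (-3/8)*a1*a2 + (17/32)*a1^2 + (15/16)*a1^3 + (3/8)*a1^4"
  "wc4 a1 a2 a3 a4 9 = 0"
  by (simp_all add: wc4_def)

definition wc6 :: "real \<Rightarrow> real \<Rightarrow> real \<Rightarrow> real \<Rightarrow> nat \<Rightarrow> real" where
  "wc6 a1 a2 a3 a4 k = (if k = 0 then 0 else if k = 1 then 0 else if k = 2 then 0 else if k = 3 then 0 else if k = 4 then 0 else if k = 5 then 0 else if k = 6 then (1/64) else if k = 7 then 0 else if k = 8 then (-3/32)*a1 + (-3/32)*a1^2 else if k = 9 then 0 else 0)"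

lemma wc6_idx:
  "wc6 a1 a2 a3 a4 0 = 0"
  "wc6 a1 a2 a3 a4 1 = 0"
  "wc6 a1 a2 a3 a4 2 = 0"
  "wc6 a1 a2 a3 a4 3 = 0"
  "wc6 a1 a2 a3 a4 4 = 0"
  "wc6 a1 a2 a3 a4 5 = 0"
  "wc6 a1 a2 a3 a4 6 = (1/64)"
  "wc6 a1 a2 a3 a4 7 = 0"
  "wc6 a1 a2 a3 a4 8 = (-3/32)*a1 + (-3/32)*a1^2"
  "wc6 a1 a2 a3 a4 9 = 0"
  by (simp_all add: wc6_def)

definition wc8 :: "real \<Rightarrow> real \<Rightarrow> real \<Rightarrow> real \<Rightarrow> nat \<Rightarrow> real" where
  "wc8 a1 a2 a3 a4 k = (if k = 0 then 0 else if k = 1 then 0 else if k = 2 then 0 else if k = 3 then 0 else if k = 4 then 0 else if k = 5 then 0 else if k = 6 then 0 else if k = 7 then 0 else if k = 8 then (1/256) else if k = 9 then 0 else 0)"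

lemma wc8_idx:
  "wc8 a1 a2 a3 a4 0 = 0"
  "wc8 a1 a2 a3 a4 1 = 0"
  "wc8 a1 a2 a3 a4 2 = 0"
  "wc8 a1 a2 a3 a4 3 = 0"
  "wc8 a1 a2 a3 a4 4 = 0"
  "wc8 a1 a2 a3 a4 5 = 0"
  "wc8 a1 a2 a3 a4 6 = 0"
  "wc8 a1 a2 a3 a4 7 = 0"
  "wc8 a1 a2 a3 a4 8 = (1/256)"
  "wc8 a1 a2 a3 a4 9 = 0"
  by (simp_all add: wc8_def)

definition pF2c :: "real \<Rightarrow> real \<Rightarrow> real \<Rightarrow> real \<Rightarrow> nat \<Rightarrow> real" where
  "pF2c a1 a2 a3 a4 k = (if k = 0 then 1 else if k = 1 then 0 else if k = 2 then (1/4)*a1 else if k = 3 then 0 else if k = 4 then (1/16)*a2 + (-1/2)*a1^2 + (-1/2)*a1^3 else if k = 5 then 0 else if k = 6 then (1/64)*a3 + (-5/8)*a1*a2 + (-1/16)*a1^2 + (-1)*a1^2*a2 + (9/16)*a1^3 + (7/8)*a1^4 + (1/4)*a1^5 else if k = 7 then 0 else if k = 8 then (1/256)*a4 + (-3/16)*a2^2 + (-25/64)*a1*a3 + (-5/32)*a1*a2 + (-5/8)*a1*a2^2 + (-1/64)*a1^2 + (-11/16)*a1^2*a3 + (69/64)*a1^2*a2 + (3/16)*a1^3 + (81/32)*a1^3*a2 + (-17/64)*a1^4 + (7/8)*a1^4*a2 + (-23/32)*a1^5 + (-1/4)*a1^6 else if k = 9 then 0 else 0)"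

lemma pF2c_idx:
  "pF2c a1 a2 a3 a4 0 = 1"
  "pF2c a1 a2 a3 a4 1 = 0"
  "pF2c a1 a2 a3 a4 2 = (1/4)*a1"
  "pF2c a1 a2 a3 a4 3 = 0"
  "pF2c a1 a2 a3 a4 4 = (1/16)*a2 + (-1/2)*a1^2 + (-1/2)*a1^3"
  "pF2c a1 a2 a3 a4 5 = 0"
  "pF2c a1 a2 a3 a4 6 = (1/64)*a3 + (-5/8)*a1*a2 + (-1/16)*a1^2 + (-1)*a1^2*a2 + (9/16)*a1^3 + (7/8)*a1^4 + (1/4)*a1^5"
  "pF2c a1 a2 a3 a4 7 = 0"
  "pF2c a1 a2 a3 a4 8 = (1/256)*a4 + (-3/16)*a2^2 + (-25/64)*a1*a3 + (-5/32)*a1*a2 + (-5/8)*a1*a2^2 + (-1/64)*a1^2 + (-11/16)*a1^2*a3 + (69/64)*a1^2*a2 + (3/16)*a1^3 + (81/32)*a1^3*a2 + (-17/64)*a1^4 + (7/8)*a1^4*a2 + (-23/32)*a1^5 + (-1/4)*a1^6"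
  "pF2c a1 a2 a3 a4 9 = 0"
  by (simp_all add: pF2c_def)

definition pS2c :: "real \<Rightarrow> real \<Rightarrow> real \<Rightarrow> real \<Rightarrow> nat \<Rightarrow> real" where
  "pS2c a1 a2 a3 a4 k = (if k = 0 then 1 else if k = 1 then 0 else if k = 2 then (3/4)*a1 else if k = 3 then 0 else if k = 4 then (9/16)*a2 + (1/16)*a1 + (1/8)*a1^2 + (1/4)*a1^3 else if k = 5 then 0 else if k = 6 then (33/64)*a3 + (3/32)*a2 + (1/64)*a1 + (13/32)*a1*a2 + (-1/32)*a1^2 + (7/8)*a1^2*a2 + (-1/8)*a1^3 + (-1/8)*a1^4 else if k = 7 then 0 else if k = 8 then (129/256)*a4 + (15/256)*a3 + (15/256)*a2 + (9/32)*a2^2 + (1/256)*a1 + (41/128)*a1*a3 + (3/64)*a1*a2 + 1*a1*a2^2 + (-3/128)*a1^2 + (47/64)*a1^2*a3 + (-11/32)*a1^2*a2 + (-1/64)*a1^3 + (-9/16)*a1^3*a2 + (1/16)*a1^4 + (1/16)*a1^4*a2 + (1/16)*a1^5 else if k = 9 then 0 else 0)"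

lemma pS2c_idx:
  "pS2c a1 a2 a3 a4 0 = 1"
  "pS2c a1 a2 a3 a4 1 = 0"
  "pS2c a1 a2 a3 a4 2 = (3/4)*a1"
  "pS2c a1 a2 a3 a4 3 = 0"
  "pS2c a1 a2 a3 a4 4 = (9/16)*a2 + (1/16)*a1 + (1/8)*a1^2 + (1/4)*a1^3"
  "pS2c a1 a2 a3 a4 5 = 0"
  "pS2c a1 a2 a3 a4 6 = (33/64)*a3 + (3/32)*a2 + (1/64)*a1 + (13/32)*a1*a2 + (-1/32)*a1^2 + (7/8)*a1^2*a2 + (-1/8)*a1^3 + (-1/8)*a1^4"
  "pS2c a1 a2 a3 a4 7 = 0"
  "pS2c a1 a2 a3 a4 8 = (129/256)*a4 + (15/256)*a3 + (15/256)*a2 + (9/32)*a2^2 + (1/256)*a1 + (41/128)*a1*a3 + (3/64)*a1*a2 + 1*a1*a2^2 + (-3/128)*a1^2 + (47/64)*a1^2*a3 + (-11/32)*a1^2*a2 + (-1/64)*a1^3 + (-9/16)*a1^3*a2 + (1/16)*a1^4 + (1/16)*a1^4*a2 + (1/16)*a1^5"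
  "pS2c a1 a2 a3 a4 9 = 0"
  by (simp_all add: pS2c_def)

definition pfinc :: "real \<Rightarrow> real \<Rightarrow> real \<Rightarrow> real \<Rightarrow> nat \<Rightarrow> real" where
  "pfinc a1 a2 a3 a4 k = (if k = 0 then 1 else if k = 1 then 0 else if k = 2 then 1*a1 else if k = 3 then 0 else if k = 4 then (5/8)*a2 + (1/16)*a1 + (-3/16)*a1^2 + (-1/4)*a1^3 else if k = 5 then 0 else if k = 6 then (17/32)*a3 + (3/32)*a2 + (1/64)*a1 + (-1/32)*a1*a2 + (-5/64)*a1^2 + (-1/8)*a1^2*a2 + (3/32)*a1^3 + (7/16)*a1^4 + (1/4)*a1^5 else if k = 7 then 0 else if k = 8 then (65/128)*a4 + (15/256)*a3 + (15/256)*a2 + (33/256)*a2^2 + (1/256)*a1 + (9/128)*a1*a3 + (-21/256)*a1*a2 + (3/8)*a1*a2^2 + (-9/256)*a1^2 + (3/64)*a1^2*a3 + (3/32)*a1^2*a2 + (11/128)*a1^3 + (75/64)*a1^3*a2 + (3/32)*a1^4 + (15/16)*a1^4*a2 + (-7/32)*a1^5 + (-3/16)*a1^6 else if k = 9 then 0 else 0)"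

lemma pfinc_idx:
  "pfinc a1 a2 a3 a4 0 = 1"
  "pfinc a1 a2 a3 a4 1 = 0"
  "pfinc a1 a2 a3 a4 2 = 1*a1"
  "pfinc a1 a2 a3 a4 3 = 0"
  "pfinc a1 a2 a3 a4 4 = (5/8)*a2 + (1/16)*a1 + (-3/16)*a1^2 + (-1/4)*a1^3"
  "pfinc a1 a2 a3 a4 5 = 0"
  "pfinc a1 a2 a3 a4 6 = (17/32)*a3 + (3/32)*a2 + (1/64)*a1 + (-1/32)*a1*a2 + (-5/64)*a1^2 + (-1/8)*a1^2*a2 + (3/32)*a1^3 + (7/16)*a1^4 + (1/4)*a1^5"
  "pfinc a1 a2 a3 a4 7 = 0"
  "pfinc a1 a2 a3 a4 8 = (65/128)*a4 + (15/256)*a3 + (15/256)*a2 + (33/256)*a2^2 + (1/256)*a1 + (9/128)*a1*a3 + (-21/256)*a1*a2 + (3/8)*a1*a2^2 + (-9/256)*a1^2 + (3/64)*a1^2*a3 + (3/32)*a1^2*a2 + (11/128)*a1^3 + (75/64)*a1^3*a2 + (3/32)*a1^4 + (15/16)*a1^4*a2 + (-7/32)*a1^5 + (-3/16)*a1^6"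
  "pfinc a1 a2 a3 a4 9 = 0"
  by (simp_all add: pfinc_def)

definition e4 :: "real \<Rightarrow> real \<Rightarrow> real \<Rightarrow> real \<Rightarrow> real" where
  "e4 a1 a2 a3 a4 = (3/8)*a2 + (-1/16)*a1 + (3/16)*a1^2 + (1/4)*a1^3"

definition e6 :: "real \<Rightarrow> real \<Rightarrow> real \<Rightarrow> real \<Rightarrow> real" where
  "e6 a1 a2 a3 a4 = (15/32)*a3 + (-3/32)*a2 + (-1/64)*a1 + (1/32)*a1*a2 + (5/64)*a1^2 + (1/8)*a1^2*a2 + (-3/32)*a1^3 + (-7/16)*a1^4 + (-1/4)*a1^5"

definition e8 :: "real \<Rightarrow> real \<Rightarrow> real \<Rightarrow> real \<Rightarrow> real" where
  "e8 a1 a2 a3 a4 = (63/128)*a4 + (-15/256)*a3 + (-15/256)*a2 + (-33/256)*a2^2 + (-1/256)*a1 + (-9/128)*a1*a3 + (21/256)*a1*a2 + (-3/8)*a1*a2^2 + (9/256)*a1^2 + (-3/64)*a1^2*a3 + (-3/32)*a1^2*a2 + (-11/128)*a1^3 + (-75/64)*a1^3*a2 + (-3/32)*a1^4 + (-15/16)*a1^4*a2 + (7/32)*a1^5 + (3/16)*a1^6"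
lemma chk_v: "\<forall>k<10. cmul (pvc a1 a2 a3 a4) (pc1c a1 a2 a3 a4) k = pd1c a1 a2 a3 a4 k"
  unfolding all10 cmul_0 cmul_1 cmul_2 cmul_3 cmul_4 cmul_5 cmul_6 cmul_7 cmul_8 cmul_9 pc1c_idx pd1c_idx pvc_idx
  by (intro conjI; algebra)

lemma chk_qc2: "\<forall>k<10. cmul (pvc a1 a2 a3 a4) (pvc a1 a2 a3 a4) k = qc2 a1 a2 a3 a4 k"
  unfolding all10 cmul_0 cmul_1 cmul_2 cmul_3 cmul_4 cmul_5 cmul_6 cmul_7 cmul_8 cmul_9 pvc_idx qc2_idx
  by (intro conjI; algebra)

lemma chk_qc4: "\<forall>k<10. cmul (qc2 a1 a2 a3 a4) (qc2 a1 a2 a3 a4) k = qc4 a1 a2 a3 a4 k"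
  unfolding all10 cmul_0 cmul_1 cmul_2 cmul_3 cmul_4 cmul_5 cmul_6 cmul_7 cmul_8 cmul_9 qc2_idx qc4_idx
  by (intro conjI; algebra)

lemma chk_qc6: "\<forall>k<10. cmul (qc4 a1 a2 a3 a4) (qc2 a1 a2 a3 a4) k = qc6 a1 a2 a3 a4 k"
  unfolding all10 cmul_0 cmul_1 cmul_2 cmul_3 cmul_4 cmul_5 cmul_6 cmul_7 cmul_8 cmul_9 qc2_idx qc4_idx qc6_idx
  by (intro conjI; algebra)

lemma chk_qc8: "\<forall>k<10. cmul (qc4 a1 a2 a3 a4) (qc4 a1 a2 a3 a4) k = qc8 a1 a2 a3 a4 k"
  unfolding all10 cmul_0 cmul_1 cmul_2 cmul_3 cmul_4 cmul_5 cmul_6 cmul_7 cmul_8 cmul_9 qc4_idx qc8_idx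
  by (intro conjI; algebra)

lemma chk_wc2: "\<forall>k<10. cmul (pwc a1 a2 a3 a4) (pwc a1 a2 a3 a4) k = wc2 a1 a2 a3 a4 k"
  unfolding all10 cmul_0 cmul_1 cmul_2 cmul_3 cmul_4 cmul_5 cmul_6 cmul_7 cmul_8 cmul_9 pwc_idx wc2_idx
  by (intro conjI; algebra)

lemma chk_wc4: "\<forall>k<10. cmul (wc2 a1 a2 a3 a4) (wc2 a1 a2 a3 a4) k = wc4 a1 a2 a3 a4 k"
  unfolding all10 cmul_0 cmul_1 cmul_2 cmul_3 cmul_4 cmul_5 cmul_6 cmul_7 cmul_8 cmul_9 wc2_idx wc4_idx
  by (intro conjI; algebra)

lemma chk_wc6: "\<forall>k<10. cmul (wc4 a1 a2 a3 a4) (wc2 a1 a2 a3 a4) k = wc6 a1 a2 a3 a4 k"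
  unfolding all10 cmul_0 cmul_1 cmul_2 cmul_3 cmul_4 cmul_5 cmul_6 cmul_7 cmul_8 cmul_9 wc2_idx wc4_idx wc6_idx
  by (intro conjI; algebra)

lemma chk_wc8: "\<forall>k<10. cmul (wc4 a1 a2 a3 a4) (wc4 a1 a2 a3 a4) k = wc8 a1 a2 a3 a4 k"
  unfolding all10 cmul_0 cmul_1 cmul_2 cmul_3 cmul_4 cmul_5 cmul_6 cmul_7 cmul_8 cmul_9 wc4_idx wc8_idx
  by (intro conjI; algebra)

lemma chk_A: "\<forall>k<10. cmul (pc1c a1 a2 a3 a4) (pF1c a1 a2 a3 a4) k = pAc a1 a2 a3 a4 k"
  unfolding all10 cmul_0 cmul_1 cmul_2 cmul_3 cmul_4 cmul_5 cmul_6 cmul_7 cmul_8 cmul_9 pAc_idx pF1c_idx pc1c_idx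
  by (intro conjI; algebra)

lemma chk_w: "\<forall>k<10. cmul (pwc a1 a2 a3 a4) (pSc a1 a2 a3 a4) k = pDc a1 a2 a3 a4 k"
  unfolding all10 cmul_0 cmul_1 cmul_2 cmul_3 cmul_4 cmul_5 cmul_6 cmul_7 cmul_8 cmul_9 pDc_idx pSc_idx pwc_idx
  by (intro conjI; algebra)

lemma chk_fin: "\<forall>k<10. cmul (pS2c a1 a2 a3 a4) (pF2c a1 a2 a3 a4) k = pfinc a1 a2 a3 a4 k"
  unfolding all10 cmul_0 cmul_1 cmul_2 cmul_3 cmul_4 cmul_5 cmul_6 cmul_7 cmul_8 cmul_9 pF2c_idx pS2c_idx pfinc_idx
  by (intro conjI; algebra)

lemma chk_pF1c: "\<forall>k<10. pF1c a1 a2 a3 a4 k = (if k = 0 then 1 else 0) + a1 * qc2 a1 a2 a3 a4 k + a2 * qc4 a1 a2 a3 a4 k + a3 * qc6 a1 a2 a3 a4 k + a4 * qc8 a1 a2 a3 a4 k"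
  unfolding all10 pF1c_idx qc2_idx qc4_idx qc6_idx qc8_idx
  apply (simp only: numeral_neq_zero zero_neq_numeral one_neq_zero zero_neq_one simp_thms if_True if_False)
  by (intro conjI; algebra)

lemma chk_pF2c: "\<forall>k<10. pF2c a1 a2 a3 a4 k = (if k = 0 then 1 else 0) + a1 * wc2 a1 a2 a3 a4 k + a2 * wc4 a1 a2 a3 a4 k + a3 * wc6 a1 a2 a3 a4 k + a4 * wc8 a1 a2 a3 a4 k"
  unfolding all10 pF2c_idx wc2_idx wc4_idx wc6_idx wc8_idx
  apply (simp only: numeral_neq_zero zero_neq_numeral one_neq_zero zero_neq_one simp_thms if_True if_False)
  by (intro conjI; algebra)

lemma chk_S: "\<forall>k<10. pSc a1 a2 a3 a4 k = pAc a1 a2 a3 a4 k + (-1)^k * pAc a1 a2 a3 a4 k"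
  unfolding all10 pSc_idx pAc_idx
  by (intro conjI; algebra)

lemma chk_D: "\<forall>k<10. pDc a1 a2 a3 a4 k = (-1)^k * pAc a1 a2 a3 a4 k - pAc a1 a2 a3 a4 k"
  unfolding all10 pDc_idx pAc_idx
  by (intro conjI; algebra)

lemma chk_S2: "\<forall>k<10. pS2c a1 a2 a3 a4 k = pSc a1 a2 a3 a4 k / 2"
  unfolding all10 pS2c_idx pSc_idx
  by (intro conjI; simp add: field_simps)

lemma chk_v0: "pvc a1 a2 a3 a4 0 = 0" by (simp add: pvc_idx)

lemma chk_w0: "pwc a1 a2 a3 a4 0 = 0" by (simp add: pwc_idx)


lemma ser_expand: "ser c u = c 0 + c 1 * u + c 2 * u^2 + c 3 * u^3 + c 4 * u^4 + c 5 * u^5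
   + c 6 * u^6 + c 7 * u^7 + c 8 * u^8 + c 9 * u^9"
  by (simp add: ser_def lessThan_nat_numeral)

lemma ser_add: "ser c u + ser d u = ser (\<lambda>i. c i + d i) u"
  by (simp add: ser_def sum.distrib algebra_simps)
lemma ser_diff: "ser c u - ser d u = ser (\<lambda>i. c i - d i) u"
  by (simp add: ser_def sum_subtractf algebra_simps)
lemma ser_div2: "ser c u / 2 = ser (\<lambda>i. c i / 2) u"
  by (simp add: ser_def sum_divide_distrib)
lemma ser_at0: "ser c 0 = c 0"
  by (simp add: ser_expand)

lemma approx_at0: "approx f g \<Longrightarrow> f 0 = g 0"
  unfolding approx_def using small_isCont0(2) by fastforce

lemma approx_bndinv: "approx f g \<Longrightarrow> isCont g 0 \<Longrightarrow> g 0 \<noteq> 0 \<Longrightarrow> bndinv f"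
  using approx_isCont approx_at0 bndinv_cont by metis

lemma approx_lin2:
  assumes "approx F P" "\<And>u. f u = b * F u + g u" "\<And>u. p u = b * P u + g u"
  shows "approx f p"
proof -
  have "approx (\<lambda>u. b * F u + g u) (\<lambda>u. b * P u + g u)"
    by (intro approx_add approx_cmult assms(1) approx_refl)
  moreover have "f = (\<lambda>u. b * F u + g u)" "p = (\<lambda>u. b * P u + g u)"
    by (intro ext assms(2,3))+
  ultimately show ?thesis by simp
qed

lemma approx_half: "approx f g \<Longrightarrow> approx (\<lambda>u. f u / 2) (\<lambda>u. g u / 2)"
  using approx_lin2[of f g "\<lambda>u. f u / 2" "1/2" "\<lambda>_. 0" "\<lambda>u. g u / 2"] by simp

lemma approx_eqR: "approx f g \<Longrightarrow> (\<And>u. g u = h u) \<Longrightarrow> approx f h"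
  by (simp add: approx_def)
lemma approx_eqL: "approx f g \<Longrightarrow> (\<And>u. f u = h u) \<Longrightarrow> approx h g"
  by (simp add: approx_def)

lemma eps0: fixes c K \<delta> :: real assumes "\<delta> > 0" "\<And>u. 0 < u \<Longrightarrow> u < \<delta> \<Longrightarrow> \<bar>c\<bar> \<le> K * u" shows "c = 0"
proof (rule ccontr)
  assume c: "c \<noteq> 0"
  define K' where "K' = max K 1"
  define u where "u = min (\<delta>/2) (\<bar>c\<bar> / (2 * K'))"
  have K': "K' > 0" "K \<le> K'" by (auto simp: K'_def)
  have u: "0 < u" "u < \<delta>" using assms(1) c K' by (auto simp: u_def)
  have "\<bar>c\<bar> \<le> K * u" by (rule assms(2)[OF u])
  also have "\<dots> \<le> K' * u" using K' u by (intro mult_right_mono) auto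
  also have "\<dots> \<le> K' * (\<bar>c\<bar> / (2 * K'))" using K' by (intro mult_left_mono) (auto simp: u_def)
  also have "\<dots> = \<bar>c\<bar> / 2" using K' by simp
  finally show False using c by simp
qed

lemma coeff0:
  assumes "small (\<lambda>u. c * u^k + u^(k+1) * g u)" "bnd g" "k < 10" shows "c = 0"
proof -
  obtain C d1 where 1: "d1 > 0" "C \<ge> 0" "\<And>u. \<bar>u\<bar> < d1 \<Longrightarrow> \<bar>c * u^k + u^(k+1) * g u\<bar> \<le> C * \<bar>u\<bar> ^ 10"
    using assms(1) by (elim smallE) blast
  obtain G d2 where 2: "d2 > 0" "G \<ge> 0" "\<And>u. \<bar>u\<bar> < d2 \<Longrightarrow> \<bar>g u\<bar> \<le> G"
    using assms(2) by (elim bndE) blast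
  show ?thesis
  proof (rule eps0[of "min 1 (min d1 d2)" c "C + G"])
    show "0 < min 1 (min d1 d2)" using 1 2 by simp
    fix u :: real assume u: "0 < u" "u < min 1 (min d1 d2)"
    have uk: "u^k > 0" using u by simp
    have "u^10 \<le> u^(k+1)" using u assms(3) by (intro power_decreasing) auto
    then have a: "C * u^10 \<le> C * u^(k+1)" using 1(2) by (simp add: mult_left_mono)
    have b: "\<bar>u^(k+1) * g u\<bar> \<le> u^(k+1) * G" using 2(3)[of u] u
      by (simp add: abs_mult mult_left_mono)
    have "\<bar>c\<bar> * u^k = \<bar>c * u^k\<bar>" using u by (simp add: abs_mult)
    also have "\<dots> \<le> \<bar>c * u^k + u^(k+1) * g u\<bar> + \<bar>u^(k+1) * g u\<bar>" by linarith
    also have "\<dots> \<le> C * u^10 + u^(k+1) * G" using 1(3)[of u] u b by simp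
    also have "\<dots> \<le> ((C + G) * u) * u^k" using a by (simp add: algebra_simps)
    finally show "\<bar>c\<bar> \<le> (C + G) * u" using uk by simp
  qed
qed

lemma core:
  fixes F A :: "real \<Rightarrow> real" and a1 a2 a3 a4 :: real
  assumes F: "approx F (\<lambda>u. 1 + a1*u^2 + a2*u^4 + a3*u^6 + a4*u^8)"
  and Adef: "\<And>u. A u = (1 - u + F u)/2 * F (((F u - 1 + u)/2) / ((1 - u + F u)/2))"
  and stab: "\<And>u. \<bar>u\<bar> < 1 \<Longrightarrow> F u = (A u + A (-u)) / 2 * F ((A (-u) - A u) / (A u + A (-u)))"
  shows "e4 a1 a2 a3 a4 = 0 \<and> e6 a1 a2 a3 a4 = 0 \<and> e8 a1 a2 a3 a4 = 0"
proof -
  have c1: "approx (\<lambda>u. (1 - u + F u)/2) (ser (pc1c a1 a2 a3 a4))"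
  proof (rule approx_lin2[OF F, of _ "1/2" "\<lambda>u. (1-u)/2"])
    fix u show "(1 - u + F u)/2 = 1/2 * F u + (1-u)/2" by (simp add: field_simps)
    show "ser (pc1c a1 a2 a3 a4) u = 1/2 * (1 + a1*u^2 + a2*u^4 + a3*u^6 + a4*u^8) + (1-u)/2"
      unfolding ser_expand pc1c_idx by (simp add: field_simps)
  qed
  have d1: "approx (\<lambda>u. (F u - 1 + u)/2) (ser (pd1c a1 a2 a3 a4))"
  proof (rule approx_lin2[OF F, of _ "1/2" "\<lambda>u. (u-1)/2"])
    fix u show "(F u - 1 + u)/2 = 1/2 * F u + (u-1)/2" by (simp add: field_simps)
    show "ser (pd1c a1 a2 a3 a4) u = 1/2 * (1 + a1*u^2 + a2*u^4 + a3*u^6 + a4*u^8) + (u-1)/2"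
      unfolding ser_expand pd1c_idx by (simp add: field_simps)
  qed
  have c1inv: "bndinv (\<lambda>u. (1 - u + F u)/2)"
    by (rule approx_bndinv[OF c1 ser_cont]) (simp add: ser_at0 pc1c_idx)
  have v: "approx (\<lambda>u. ((F u - 1 + u)/2) / ((1 - u + F u)/2)) (ser (pvc a1 a2 a3 a4))"
    by (rule approx_div_ser[OF d1 c1 chk_v c1inv])
  have Fv: "approx (\<lambda>u. F (((F u - 1 + u)/2) / ((1 - u + F u)/2))) (ser (pF1c a1 a2 a3 a4))"
    by (rule approx_Fcomp_ser[OF F v chk_v0 chk_qc2 chk_qc4 chk_qc6 chk_qc8 chk_pF1c])
  have Ap: "approx A (ser (pAc a1 a2 a3 a4))"
    using approx_mult_ser[OF c1 Fv chk_A] Adef by (simp add: fun_eq_iff[symmetric] Adef[abs_def])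
  have An: "approx (\<lambda>u. A (-u)) (ser (\<lambda>i. (-1)^i * pAc a1 a2 a3 a4 i))"
    using approx_neg[OF Ap] by (simp add: ser_neg)
  have Sp: "approx (\<lambda>u. A u + A (-u)) (ser (pSc a1 a2 a3 a4))"
    by (rule approx_eqR[OF approx_add[OF Ap An]]) (simp add: ser_add, rule ser_cong, use chk_S in auto)
  have Dp: "approx (\<lambda>u. A (-u) - A u) (ser (pDc a1 a2 a3 a4))"
    by (rule approx_eqR[OF approx_diff[OF An Ap]]) (simp add: ser_diff, rule ser_cong, use chk_D in auto)
  have Sinv: "bndinv (\<lambda>u. A u + A (-u))"
    by (rule approx_bndinv[OF Sp ser_cont]) (simp add: ser_at0 pSc_idx)
  have w: "approx (\<lambda>u. (A (-u) - A u) / (A u + A (-u))) (ser (pwc a1 a2 a3 a4))"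
    by (rule approx_div_ser[OF Dp Sp chk_w Sinv])
  have Fw: "approx (\<lambda>u. F ((A (-u) - A u) / (A u + A (-u)))) (ser (pF2c a1 a2 a3 a4))"
    by (rule approx_Fcomp_ser[OF F w chk_w0 chk_wc2 chk_wc4 chk_wc6 chk_wc8 chk_pF2c])
  have S2: "approx (\<lambda>u. (A u + A (-u)) / 2) (ser (pS2c a1 a2 a3 a4))"
    by (rule approx_eqR[OF approx_half[OF Sp]]) (simp add: ser_div2, rule ser_cong, use chk_S2 in auto)
  have "approx (\<lambda>u. (A u + A (-u)) / 2 * F ((A (-u) - A u) / (A u + A (-u)))) (ser (pfinc a1 a2 a3 a4))"
    by (rule approx_mult_ser[OF S2 Fw chk_fin])
  then have "approx F (ser (pfinc a1 a2 a3 a4))"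
    using approx_trans[OF approx_cong[of F "\<lambda>u. (A u + A (-u)) / 2 * F ((A (-u) - A u) / (A u + A (-u)))"]] stab
    by blast
  with approx_sym[OF F] have "approx (\<lambda>u. 1 + a1*u^2 + a2*u^4 + a3*u^6 + a4*u^8) (ser (pfinc a1 a2 a3 a4))"
    using approx_trans by blast
  then have sm: "small (\<lambda>u. e4 a1 a2 a3 a4 * u^4 + e6 a1 a2 a3 a4 * u^6 + e8 a1 a2 a3 a4 * u^8)"
    unfolding approx_def by (rule small_cong) (unfold ser_expand pfinc_idx e4_def e6_def e8_def, algebra)
  have E4: "e4 a1 a2 a3 a4 = 0"
  proof (rule coeff0[of _ 4 "\<lambda>u. e6 a1 a2 a3 a4 * u + e8 a1 a2 a3 a4 * u^3"])
    show "small (\<lambda>u. e4 a1 a2 a3 a4 * u ^ 4 + u ^ (4 + 1) * (e6 a1 a2 a3 a4 * u + e8 a1 a2 a3 a4 * u ^ 3))"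
      by (rule small_cong[OF sm]) (simp add: eval_nat_numeral algebra_simps)
  qed (auto intro!: bnd_cont continuous_intros)
  have E6: "e6 a1 a2 a3 a4 = 0"
  proof (rule coeff0[of _ 6 "\<lambda>u. e8 a1 a2 a3 a4 * u"])
    show "small (\<lambda>u. e6 a1 a2 a3 a4 * u ^ 6 + u ^ (6 + 1) * (e8 a1 a2 a3 a4 * u))"
      by (rule small_cong[OF sm]) (simp add: E4 eval_nat_numeral algebra_simps)
  qed (auto intro!: bnd_cont continuous_intros)
  have E8: "e8 a1 a2 a3 a4 = 0"
  proof (rule coeff0[of _ 8 "\<lambda>u. 0"])
    show "small (\<lambda>u. e8 a1 a2 a3 a4 * u ^ 8 + u ^ (8 + 1) * 0)"
      by (rule small_cong[OF sm]) (simp add: E4 E6)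
  qed (auto intro!: bnd_cont continuous_intros)
  show ?thesis using E4 E6 E8 by simp
qed

lemma core_solved:
  assumes "e4 a1 a2 a3 a4 = 0" "e6 a1 a2 a3 a4 = 0" "e8 a1 a2 a3 a4 = 0"
  shows "a2 = 1/6 * a1 * (1 + a1) * (1 - 4 * a1)"
    "a3 = 1/90 * a1 * (1 + a1) * (6 - 31 * a1 + 36 * a1 ^ 2 + 64 * a1 ^ 3)"
    "a4 = 1/2520 * a1 * (1 + a1) * (90 - 531 * a1 + 937 * a1 ^ 2 + 568 * a1 ^ 3
                  - 3088 * a1 ^ 4 - 2176 * a1 ^ 5)"
proof -
  show A2: "a2 = 1/6 * a1 * (1 + a1) * (1 - 4 * a1)"
    using assms(1) unfolding e4_def by algebra
  show A3: "a3 = 1/90 * a1 * (1 + a1) * (6 - 31 * a1 + 36 * a1 ^ 2 + 64 * a1 ^ 3)"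
    using assms(2) A2 unfolding e6_def by algebra
  show "a4 = 1/2520 * a1 * (1 + a1) * (90 - 531 * a1 + 937 * a1 ^ 2 + 568 * a1 ^ 3
                  - 3088 * a1 ^ 4 - 2176 * a1 ^ 5)"
    using assms(3) A2 A3 unfolding e8_def by algebra
qed


lemma sum6: "(\<Sum>n\<le>(5::nat). f n) = f 0 + f 1 + f 2 + f 3 + f 4 + (f 5 :: real)"
  by (simp add: atMost_nat_numeral)

lemma powi_inv: fixes u :: real assumes "u \<noteq> 0"
  shows "(1/u) powi (1 - 2 * int n) = u^(2*n) / u"
proof -
  have "(1/u) powi (1 - 2 * int n) = u powi (2 * int n - 1)"
    by (simp add: power_int_divide_distrib power_int_minus[symmetric] flip: power_int_minus_divide)
  also have "\<dots> = u powi (int (2*n) + (-1))" by simp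
  also have "\<dots> = u powi (int (2*n)) * u powi (-1)" using assms by (metis power_int_add)
  also have "\<dots> = u^(2*n) * u powi (-1)" by (simp only: power_int_of_nat)
  also have "\<dots> = u^(2*n) / u" by (simp add: power_int_minus divide_inverse)
  finally show ?thesis .
qed

lemma abs5: fixes x1 x2 x3 x4 x5 :: real
  shows "\<bar>x1 + x2 + x3 + x4 + x5\<bar> \<le> \<bar>x1\<bar> + \<bar>x2\<bar> + \<bar>x3\<bar> + \<bar>x4\<bar> + \<bar>x5\<bar>"
proof -
  have "\<bar>x1 + x2 + x3 + x4 + x5\<bar> \<le> \<bar>x1 + x2 + x3 + x4\<bar> + \<bar>x5\<bar>" by (rule abs_triangle_ineq)
  moreover have "\<bar>x1 + x2 + x3 + x4\<bar> \<le> \<bar>x1 + x2 + x3\<bar> + \<bar>x4\<bar>" by (rule abs_triangle_ineq)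
  moreover have "\<bar>x1 + x2 + x3\<bar> \<le> \<bar>x1 + x2\<bar> + \<bar>x3\<bar>" by (rule abs_triangle_ineq)
  moreover have "\<bar>x1 + x2\<bar> \<le> \<bar>x1\<bar> + \<bar>x2\<bar>" by (rule abs_triangle_ineq)
  ultimately show ?thesis by linarith
qed

lemma pow_le_u: fixes u :: real assumes "0 < u" "u < 1" "k \<ge> 1" shows "u^k \<le> u"
  using power_decreasing[of 1 k u] assms by simp

theorem mainTheorem4:
  fixes M :: "real \<Rightarrow> real \<Rightarrow> real" and a :: "nat \<Rightarrow> real" and t :: real
  assumes "is_mean M" and "symmetric_mean M" and "homogeneous_mean M" and "stable_mean M"
    and "has_sym_asymp_expansion M a"
  shows "(\<lambda>x. M (x - t) (x + t)
           - (x + a 1 * t ^ 2 * x powi (-1)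
              + 1/6 * a 1 * (1 + a 1) * (1 - 4 * a 1) * t ^ 4 * x powi (-3)
              + 1/90 * a 1 * (1 + a 1) * (6 - 31 * a 1 + 36 * a 1 ^ 2 + 64 * a 1 ^ 3)
                  * t ^ 6 * x powi (-5)
              + 1/2520 * a 1 * (1 + a 1) * (90 - 531 * a 1 + 937 * a 1 ^ 2 + 568 * a 1 ^ 3
                  - 3088 * a 1 ^ 4 - 2176 * a 1 ^ 5) * t ^ 8 * x powi (-7)))
         \<in> O[at_top](\<lambda>x. x powi (-9))"
proof -
  note mean = assms(1)[unfolded is_mean_def, rule_format]
  note sym = assms(2)[unfolded symmetric_mean_def, rule_format]
  note hom = assms(3)[unfolded homogeneous_mean_def, rule_format]
  note stb = assms(4)[unfolded stable_mean_def, rule_format]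
  note ex = assms(5)[unfolded has_sym_asymp_expansion_def, rule_format]
  define F where "F u = M (1 - u) (1 + u)" for u
  have homF: "M (c - d) (c + d) = c * F (d / c)" if c: "c > 0" "\<bar>d\<bar> < c" for c d
  proof -
    have dc: "-c < d" "d < c" using c(2) by auto
    then have "1 - d/c > 0" "1 + d/c > 0" using c(1) by (auto simp: field_simps)
    then have "M (c * (1 - d/c)) (c * (1 + d/c)) = c * M (1 - d/c) (1 + d/c)"
      using hom c by blast
    moreover have "c * (1 - d/c) = c - d" "c * (1 + d/c) = c + d" using c by (auto simp: field_simps)
    ultimately show ?thesis by (simp add: F_def)
  qed
  have Fbd: "min (1-u) (1+u) \<le> F u \<and> F u \<le> max (1-u) (1+u)" if "\<bar>u\<bar> < 1" for u
    using mean[of "1-u" "1+u"] that by (auto simp: F_def)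
  have Fpos: "F u > 0" if "\<bar>u\<bar> < 1" for u
    using Fbd[OF that] that by (auto simp: min_def split: if_splits)
  have Fev: "F (-u) = F u" if "\<bar>u\<bar> < 1" for u
    using sym[of "1+u" "1-u"] that by (simp add: F_def)
  define A where "A u = (1 - u + F u)/2 * F (((F u - 1 + u)/2) / ((1 - u + F u)/2))" for u
  have AM: "A u = M (1 - u) (F u)" if u: "\<bar>u\<bar> < 1" for u
  proof -
    have "M ((1 - u + F u)/2 - (F u - 1 + u)/2) ((1 - u + F u)/2 + (F u - 1 + u)/2)
          = (1 - u + F u)/2 * F (((F u - 1 + u)/2) / ((1 - u + F u)/2))"
      using Fpos[OF u] u by (intro homF) auto
    moreover have "(1 - u + F u)/2 - (F u - 1 + u)/2 = 1 - u" "(1 - u + F u)/2 + (F u - 1 + u)/2 = F u"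
      by (simp_all add: field_simps)
    ultimately show ?thesis by (simp only: A_def)
  qed
  have Apos: "A u > 0" if u: "\<bar>u\<bar> < 1" for u
  proof -
    have "min (1-u) (F u) \<le> M (1-u) (F u)" using mean[of "1-u" "F u"] Fpos[OF u] u by auto
    moreover have "min (1-u) (F u) > 0" using Fpos[OF u] u by auto
    ultimately show ?thesis using AM[OF u] by linarith
  qed
  have stab: "F u = (A u + A (-u)) / 2 * F ((A (-u) - A u) / (A u + A (-u)))" if u: "\<bar>u\<bar> < 1" for u
  proof -
    have 1: "F u = M (M (1-u) (F u)) (M (F u) (1+u))"
      using stb[of "1-u" "1+u"] u by (simp add: F_def)
    have "M (F u) (1+u) = M (1 + u) (F u)" using sym[of "F u" "1+u"] Fpos[OF u] u by auto
    also have "\<dots> = A (-u)" using AM[of "-u"] Fev[OF u] u by simp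
    finally have 2: "F u = M (A u) (A (-u))" using 1 AM[OF u] by simp
    have p: "A u > 0" "A (-u) > 0" using Apos u by auto
    have "M ((A u + A (-u))/2 - (A (-u) - A u)/2) ((A u + A (-u))/2 + (A (-u) - A u)/2)
        = (A u + A (-u))/2 * F (((A (-u) - A u)/2) / ((A u + A (-u))/2))"
      using p by (intro homF) auto
    moreover have "(A u + A (-u))/2 - (A (-u) - A u)/2 = A u" "(A u + A (-u))/2 + (A (-u) - A u)/2 = A (-u)"
      by (simp_all add: field_simps)
    moreover have "((A (-u) - A u)/2) / ((A u + A (-u))/2) = (A (-u) - A u) / (A u + A (-u))"
      using p by (simp add: field_simps)
    ultimately show ?thesis using 2 by simp
  qed
  have E1: "(\<lambda>x. M (x - 1) (x + 1) - (\<Sum>n\<le>5. a n * 1 ^ (2 * n) * x powi (1 - 2 * int n)))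
      \<in> o[at_top](\<lambda>x. x powi (1 - 2 * int 5))" using ex[of 1 5] by simp
  from landau_o.smallD[OF E1, of 1] obtain X where
    X: "\<And>x. x \<ge> X \<Longrightarrow> norm (M (x - 1) (x + 1) - (\<Sum>n\<le>5. a n * 1 ^ (2 * n) * x powi (1 - 2 * int n)))
        \<le> 1 * norm (x powi (1 - 2 * int 5))"
    by (auto simp: eventually_at_top_linorder)
  define P5 where "P5 u = a 0 + a 1 * u^2 + a 2 * u^4 + a 3 * u^6 + a 4 * u^8 + a 5 * u^10" for u
  define \<delta> where "\<delta> = 1 / max X 1"
  have \<delta>: "\<delta> > 0" "\<delta> \<le> 1" by (auto simp: \<delta>_def)
  have bound: "\<bar>F u - P5 u\<bar> \<le> u^10" if u: "0 < u" "u < \<delta>" for u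
  proof -
    define x where "x = 1 / u"
    have "u * max X 1 < 1" using u by (simp add: \<delta>_def field_simps)
    then have x: "x > max X 1" unfolding x_def using u(1) by (metis pos_less_divide_eq mult.commute)
    then have xX: "x \<ge> X" and x1: "x > 1" by auto
    have Mx: "M (x - 1) (x + 1) = x * F u"
      using homF[of x 1] x1 u by (simp add: x_def)
    have un: "u \<noteq> 0" using u by simp
    have "(\<Sum>n\<le>5. a n * 1 ^ (2 * n) * x powi (1 - 2 * int n)) = (\<Sum>n\<le>5. a n * u^(2*n) / u)"
    proof (intro sum.cong refl)
      fix n :: nat
      have "x powi (1 - 2 * int n) = u^(2*n)/u" unfolding x_def by (rule powi_inv[OF un])
      then show "a n * 1 ^ (2 * n) * x powi (1 - 2 * int n) = a n * u^(2*n) / u"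
        by (simp only: power_one mult_1_right times_divide_eq_right)
    qed
    also have "\<dots> = x * P5 u"
      using un by (simp add: sum6 x_def P5_def field_simps power2_eq_square)
    finally have S: "(\<Sum>n\<le>5. a n * 1 ^ (2 * n) * x powi (1 - 2 * int n)) = x * P5 u" .
    have "x powi (1 - 2 * int 5) = u^(2*5)/u" unfolding x_def by (rule powi_inv[OF un])
    also have "u^(2*5) = u^(Suc 9)" by simp
    also have "\<dots> = u^9 * u" by (rule power_Suc2)
    finally have "x powi (1 - 2 * int 5) = u^9" using un by simp
    then have N: "norm (x powi (1 - 2 * int 5)) = u^9" using u by simp
    have "\<bar>x * F u - x * P5 u\<bar> \<le> u^9" using X[OF xX] Mx S N by simp
    then have "x * \<bar>F u - P5 u\<bar> \<le> u^9" using x1 by (simp add: abs_mult right_diff_distrib[symmetric])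
    then have "\<bar>F u - P5 u\<bar> \<le> u^9 * u" using u by (simp add: x_def field_simps)
    then show ?thesis by (simp add: power_Suc2[symmetric] del: power_Suc2)
  qed
  have a0: "a 0 = 1"
  proof -
    have "a 0 - 1 = 0"
    proof (rule eps0[of \<delta> _ "\<bar>a 1\<bar> + \<bar>a 2\<bar> + \<bar>a 3\<bar> + \<bar>a 4\<bar> + \<bar>a 5\<bar> + 2"])
      show "\<delta> > 0" using \<delta> by simp
      fix u :: real assume u: "0 < u" "u < \<delta>"
      then have u1: "u < 1" using \<delta> by simp
      have f1: "\<bar>F u - 1\<bar> \<le> u" using Fbd[of u] u u1 by (auto simp: min_def max_def split: if_splits)
      have f2: "\<bar>F u - P5 u\<bar> \<le> u" using bound[OF u] pow_le_u[OF u(1) u1, of 10] by simp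
      have pk: "u^k \<le> u" if "k \<ge> 1" for k using pow_le_u[OF u(1) u1 that] .
      have f3: "\<bar>P5 u - a 0\<bar> \<le> (\<bar>a 1\<bar> + \<bar>a 2\<bar> + \<bar>a 3\<bar> + \<bar>a 4\<bar> + \<bar>a 5\<bar>) * u"
      proof -
        have "\<bar>P5 u - a 0\<bar> \<le> \<bar>a 1\<bar> * u^2 + \<bar>a 2\<bar> * u^4 + \<bar>a 3\<bar> * u^6 + \<bar>a 4\<bar> * u^8 + \<bar>a 5\<bar> * u^10"
          using abs5[of "a 1 * u^2" "a 2 * u^4" "a 3 * u^6" "a 4 * u^8" "a 5 * u^10"] u
          by (simp add: P5_def abs_mult add.assoc)
        also have "\<dots> \<le> \<bar>a 1\<bar> * u + \<bar>a 2\<bar> * u + \<bar>a 3\<bar> * u + \<bar>a 4\<bar> * u + \<bar>a 5\<bar> * u"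
          by (intro add_mono mult_left_mono pk) auto
        finally show ?thesis by (simp add: algebra_simps)
      qed
      show "\<bar>a 0 - 1\<bar> \<le> (\<bar>a 1\<bar> + \<bar>a 2\<bar> + \<bar>a 3\<bar> + \<bar>a 4\<bar> + \<bar>a 5\<bar> + 2) * u"
        using f1 f2 f3 by (simp add: algebra_simps) linarith
    qed
    then show ?thesis by simp
  qed
  have F0: "F 0 = 1" using Fbd[of 0] by simp
  have Fapp: "approx F (\<lambda>u. 1 + a 1*u^2 + a 2*u^4 + a 3*u^6 + a 4*u^8)"
  proof -
  have "\<bar>F u - (1 + a 1*u^2 + a 2*u^4 + a 3*u^6 + a 4*u^8)\<bar> \<le> (1 + \<bar>a 5\<bar>) * \<bar>u\<bar>^10"
    if u: "\<bar>u\<bar> < \<delta>" for u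
  proof -
    have key: "\<bar>F w - (1 + a 1*w^2 + a 2*w^4 + a 3*w^6 + a 4*w^8)\<bar> \<le> (1 + \<bar>a 5\<bar>) * \<bar>w\<bar>^10"
      if w: "0 < w" "w < \<delta>" for w
    proof -
      have "F w - (1 + a 1*w^2 + a 2*w^4 + a 3*w^6 + a 4*w^8) = (F w - P5 w) + a 5 * w^10"
        by (simp add: P5_def a0)
      then have "\<bar>F w - (1 + a 1*w^2 + a 2*w^4 + a 3*w^6 + a 4*w^8)\<bar> \<le> w^10 + \<bar>a 5\<bar> * w^10"
        using bound[OF w] w abs_triangle_ineq[of "F w - P5 w" "a 5 * w^10"] by (simp add: abs_mult)
      then show ?thesis using w by (simp add: algebra_simps)
    qed
    show "\<bar>F u - (1 + a 1*u^2 + a 2*u^4 + a 3*u^6 + a 4*u^8)\<bar> \<le> (1 + \<bar>a 5\<bar>) * \<bar>u\<bar>^10"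
    proof (cases "u = 0")
      case True then show ?thesis using F0 by simp
    next
      case False
      show ?thesis
      proof (cases "u > 0")
        case True then show ?thesis using key[of u] u by simp
      next
        case False
        then have "-u > 0" using \<open>u \<noteq> 0\<close> by simp
        moreover have "F (-u) = F u" using Fev[of u] u \<delta> by simp
        ultimately show ?thesis using key[of "-u"] u by simp
      qed
    qed
  qed
  then show ?thesis unfolding approx_def small_def using \<delta> by blast
  qed
  have "e4 (a 1) (a 2) (a 3) (a 4) = 0 \<and> e6 (a 1) (a 2) (a 3) (a 4) = 0 \<and> e8 (a 1) (a 2) (a 3) (a 4) = 0"
    by (rule core[OF Fapp A_def stab])
  note rel = core_solved[OF this[THEN conjunct1] this[THEN conjunct2, THEN conjunct1] this[THEN conjunct2, THEN conjunct2]]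
  have Et: "(\<lambda>x. M (x - t) (x + t) - (\<Sum>n\<le>5. a n * t ^ (2 * n) * x powi (1 - 2 * int n)))
      \<in> O[at_top](\<lambda>x. x powi (-9))" using landau_o.small_imp_big[OF ex[of t 5]] by simp
  have E5: "(\<lambda>x. a 5 * t ^ 10 * x powi (-9)) \<in> O[at_top](\<lambda>x. x powi (-9))" by simp
  have "(\<lambda>x. (M (x - t) (x + t) - (\<Sum>n\<le>5. a n * t ^ (2 * n) * x powi (1 - 2 * int n)))
      + a 5 * t ^ 10 * x powi (-9)) \<in> O[at_top](\<lambda>x. x powi (-9))"
    by (rule sum_in_bigo(1)[OF Et E5])
  note fact = this
  have sumeq: "(\<Sum>n\<le>5. a n * t ^ (2 * n) * x powi (1 - 2 * int n)) = a 0 * x + a 1 * t^2 * x powi (-1)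
     + a 2 * t^4 * x powi (-3) + a 3 * t^6 * x powi (-5) + a 4 * t^8 * x powi (-7) + a 5 * t^10 * x powi (-9)" for x
    by (simp add: sum6)
  have eq: "M (x - t) (x + t)
           - (x + a 1 * t ^ 2 * x powi (-1)
              + 1/6 * a 1 * (1 + a 1) * (1 - 4 * a 1) * t ^ 4 * x powi (-3)
              + 1/90 * a 1 * (1 + a 1) * (6 - 31 * a 1 + 36 * a 1 ^ 2 + 64 * a 1 ^ 3)
                  * t ^ 6 * x powi (-5)
              + 1/2520 * a 1 * (1 + a 1) * (90 - 531 * a 1 + 937 * a 1 ^ 2 + 568 * a 1 ^ 3
                  - 3088 * a 1 ^ 4 - 2176 * a 1 ^ 5) * t ^ 8 * x powi (-7))
      = (M (x - t) (x + t) - (\<Sum>n\<le>5. a n * t ^ (2 * n) * x powi (1 - 2 * int n)))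
      + a 5 * t ^ 10 * x powi (-9)" for x
    unfolding sumeq by (simp only: a0 rel)
  show ?thesis using fact by (simp only: eq)
qed


end
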